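(* Let $H=\Bbbk[D]$, let $A$ be an alternative algebra over $\Bbbk$ which is not associative, and let $a,b,c\in A$ with $\{a,b,c\}:=(ab)c-a(bc)\neq0$. Let $A[t]=A\otimes\Bbbk[t]$ with the coaction $\Delta_{A[t]}(u\otimes t^n)=\sum_{s\ge0}\binom ns D^s\otimes(u\otimes t^{n-s})$, and let $P(A[t])=H\otimes A[t]$ with the pseudoproduct $(h\otimes u)*(g\otimes v)=h\,v_{(1)}\otimes g\,u_{(1)}\otimes_H(1\otimes u_{(2)}v_{(2)})$. Then $A[t]$ is an $H$-comodule algebra, $P(A[t])$ is an alternative $H$-pseudoalgebra (i.e. an alternative conformal algebra), and for $x=1\otimes(a\otimes t+b\otimes1)$, $y=1\otimes(c\otimes1)$ one has $$(x*y)*x-x*(y*x)=(D\otimes1\otimes1)\otimes_H\big(1\otimes(\{b,c,a\}\otimes1)\big)+(1\otimes1\otimes D)\otimes_H\big(1\otimes(\{a,c,b\}\otimes1)\big)\neq0.$$ In particular, the conformal subalgebra of $P(A[t])$ generated by the two elements $x,y$ is not associative.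
   Context: $\Bbbk$ is a field of characteristic $0$; $H=\Bbbk[D]$ is the Hopf algebra with $\Delta(D)=D\otimes1+1\otimes D$, $\varepsilon(D)=0$, $S(D)=-D$. An algebra is alternative if $(xx)y=x(xy)$ and $x(yy)=(xy)y$ for all $x,y$. An $H$-comodule algebra is an algebra $B$ with an algebra homomorphism $\Delta_B:B\to H\otimes B$, $\Delta_B(u)=u_{(1)}\otimes u_{(2)}$, with $(\mathrm{id}_H\otimes\Delta_B)\Delta_B=(\Delta\otimes\mathrm{id}_B)\Delta_B$ and $\varepsilon(u_{(1)})u_{(2)}=u$. $H^{\otimes n}\otimes_HM$ is formed with respect to the right action $(f_1\otimes\cdots\otimes f_n)h=f_1h_{(1)}\otimes\cdots\otimes f_nh_{(n)}$. Iterated pseudoproducts use the expanded pseudoproduct: if $u*v=\sum_if_i\otimes g_i\otimes_Hw_i$ then $(F\otimes_Hu)*(G\otimes_Hv)=\sum_iF\Delta^{(n)}(f_i)\otimes G\Delta^{(m)}(g_i)\otimes_Hw_i$ for $F\in H^{\otimes n}$, $G\in H^{\otimes m}$ ($\Delta^{(1)}=\mathrm{id}$, $\Delta^{(k+1)}=(\mathrm{id}\otimes\Delta^{(k)})\Delta$), elements $u$ being regarded as $1\otimes_Hu$. An $H$-pseudoalgebra $P$ is alternative if for all $u,v,w\in P$: $u*(v*w)-(u*v)*w=(\sigma_{12}\otimes_H\mathrm{id})((v*u)*w-v*(u*w))$ and $u*(v*w)-(u*v)*w=(\sigma_{23}\otimes_H\mathrm{id})((u*w)*v-u*(w*v))$,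 where $\sigma_{ij}$ transposes the $i$-th and $j$-th tensor factors of $H^{\otimes3}$; it is associative if $(u*v)*w=u*(v*w)$. *)

theory Defs
  imports "HOL-Computational_Algebra.Polynomial"
begin

text \<open>
Tensor products with polynomial algebras are realised by polynomial types:
  \<open>A[t] = A \<otimes> k[t]\<close> is \<open>'a poly\<close> (variable t);
  \<open>H \<otimes> V\<close> (H = k[D]) is \<open>V poly\<close> (variable D);
  \<open>H\<^sup>\<otimes>\<^sup>n \<otimes> V\<close> is \<open>V poly \<dots> poly\<close> (n nested levels), the OUTERMOST level being the
  FIRST tensor factor of \<open>H\<^sup>\<otimes>\<^sup>n\<close>.  In particular \<open>H\<otimes>H = 'k poly poly\<close>,
  \<open>H\<otimes>H\<otimes>H = 'k poly poly poly\<close> as commutative algebras.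
\<open>H\<^sup>\<otimes>\<^sup>n \<otimes>\<^sub>H M\<close> is the quotient of \<open>H\<^sup>\<otimes>\<^sup>n \<otimes> M\<close> by the \<open>k\<close>-span of all
\<open>(F h) \<otimes> m - F \<otimes> (h m)\<close>; we work with representatives and the induced equivalence.
\<close>

definition nonassoc_algebra :: "('k::field \<Rightarrow> 'a::ab_group_add \<Rightarrow> 'a) \<Rightarrow> ('a \<Rightarrow> 'a \<Rightarrow> 'a) \<Rightarrow> bool" where
  "nonassoc_algebra sc mul \<longleftrightarrow>
     (\<forall>c d u. sc (c + d) u = sc c u + sc d u) \<and>
     (\<forall>c u v. sc c (u + v) = sc c u + sc c v) \<and>
     (\<forall>c d u. sc (c * d) u = sc c (sc d u)) \<and>
     (\<forall>u. sc 1 u = u) \<and>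
     (\<forall>u v w. mul (u + v) w = mul u w + mul v w) \<and>
     (\<forall>u v w. mul u (v + w) = mul u v + mul u w) \<and>
     (\<forall>c u v. mul (sc c u) v = sc c (mul u v)) \<and>
     (\<forall>c u v. mul u (sc c v) = sc c (mul u v))"

definition alternative_alg :: "('a \<Rightarrow> 'a \<Rightarrow> 'a) \<Rightarrow> bool" where
  "alternative_alg mul \<longleftrightarrow>
     (\<forall>x y. mul (mul x x) y = mul x (mul x y) \<and> mul x (mul y y) = mul (mul x y) y)"

definition associative_alg :: "('a \<Rightarrow> 'a \<Rightarrow> 'a) \<Rightarrow> bool" where
  "associative_alg mul \<longleftrightarrow> (\<forall>x y z. mul (mul x y) z = mul x (mul y z))"

definition assocA :: "('a::ab_group_add \<Rightarrow> 'a \<Rightarrow> 'a) \<Rightarrow> 'a \<Rightarrow> 'a \<Rightarrow> 'a \<Rightarrow> 'a" where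
  "assocA mul a b c = mul (mul a b) c - mul a (mul b c)"

text \<open>\<open>\<Delta>(h) = h(D\<otimes>1 + 1\<otimes>D)\<close> in \<open>H\<otimes>H\<close>, and \<open>\<Delta>\<^sup>(\<^sup>3\<^sup>)(h) = h(D\<^sub>1+D\<^sub>2+D\<^sub>3)\<close> in \<open>H\<^sup>\<otimes>\<^sup>3\<close>.\<close>
definition Delta2 :: "'k::field poly \<Rightarrow> 'k poly poly" where
  "Delta2 h = pcompose (map_poly (\<lambda>c. [:c:]) h) ([:0, 1:] + [:[:0, 1:]:])"

definition Delta3 :: "'k::field poly \<Rightarrow> 'k poly poly poly" where
  "Delta3 h = pcompose (map_poly (\<lambda>c. [:[:c:]:]) h)
                ([:0, 1:] + [:[:0, 1:]:] + [:[:[:0, 1:]:]:])"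

definition mon2 :: "nat \<Rightarrow> nat \<Rightarrow> 'k::field poly poly" where
  "mon2 i j = monom (monom 1 j) i"

definition tensHH :: "'k::field poly \<Rightarrow> 'k poly \<Rightarrow> 'k poly poly" where
  "tensHH h g = map_poly (\<lambda>c. smult c g) h"

definition tensHH_H :: "'k::field poly poly \<Rightarrow> 'k poly \<Rightarrow> 'k poly poly poly" where
  "tensHH_H F g = map_poly (map_poly (\<lambda>c. smult c g)) F"

definition tensH_HH :: "'k::field poly \<Rightarrow> 'k poly poly \<Rightarrow> 'k poly poly poly" where
  "tensH_HH f G = map_poly (\<lambda>c. map_poly (smult c) G) f"

definition mulHB :: "('b::comm_monoid_add \<Rightarrow> 'b \<Rightarrow> 'b) \<Rightarrow> 'b poly \<Rightarrow> 'b poly \<Rightarrow> 'b poly" where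
  "mulHB mulB X Y = (\<Sum>i\<le>degree X. \<Sum>j\<le>degree Y. monom (mulB (coeff X i) (coeff Y j)) (i + j))"

definition DeltaId :: "('k::field \<Rightarrow> 'b::comm_monoid_add \<Rightarrow> 'b) \<Rightarrow> 'b poly \<Rightarrow> 'b poly poly" where
  "DeltaId scB X = (\<Sum>s\<le>degree X. map_poly (map_poly (\<lambda>c. scB c (coeff X s))) (Delta2 (monom 1 s)))"

text \<open>\<open>B\<close> (with scalars \<open>scB\<close>, product \<open>mulB\<close>) is an \<open>H\<close>-comodule algebra with
 coaction \<open>\<Delta>\<^sub>B\<close>: \<open>\<Delta>\<^sub>B\<close> is a \<open>k\<close>-linear multiplicative map, coassociative and counital
 (the counit \<open>\<epsilon>(D\<^sup>s) = \<delta>\<^sub>s\<^sub>0\<close>, so \<open>\<epsilon>(u\<^sub>(\<^sub>1\<^sub>))u\<^sub>(\<^sub>2\<^sub>)\<close> is the \<open>D\<^sup>0\<close>-coefficient).\<close>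
definition H_comodule_algebra ::
  "('k::field \<Rightarrow> 'b::comm_monoid_add \<Rightarrow> 'b) \<Rightarrow> ('b \<Rightarrow> 'b \<Rightarrow> 'b) \<Rightarrow> ('b \<Rightarrow> 'b poly) \<Rightarrow> bool" where
  "H_comodule_algebra scB mulB DB \<longleftrightarrow>
     (\<forall>u v. DB (u + v) = DB u + DB v) \<and>
     (\<forall>c u. DB (scB c u) = map_poly (scB c) (DB u)) \<and>
     (\<forall>u v. DB (mulB u v) = mulHB mulB (DB u) (DB v)) \<and>
     (\<forall>u. map_poly DB (DB u) = DeltaId scB (DB u)) \<and>
     (\<forall>u. coeff (DB u) 0 = u)"

definition scaleAt :: "('k \<Rightarrow> 'a::zero \<Rightarrow> 'a) \<Rightarrow> 'k \<Rightarrow> 'a poly \<Rightarrow> 'a poly" where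
  "scaleAt sc c p = map_poly (sc c) p"

definition mulAt :: "('a::comm_monoid_add \<Rightarrow> 'a \<Rightarrow> 'a) \<Rightarrow> 'a poly \<Rightarrow> 'a poly \<Rightarrow> 'a poly" where
  "mulAt mul p q = (\<Sum>i\<le>degree p. \<Sum>j\<le>degree q. monom (mul (coeff p i) (coeff q j)) (i + j))"

definition coactAt :: "('k::field \<Rightarrow> 'a::comm_monoid_add \<Rightarrow> 'a) \<Rightarrow> 'a poly \<Rightarrow> 'a poly poly" where
  "coactAt sc p = (\<Sum>n\<le>degree p. \<Sum>s\<le>n. monom (monom (sc (of_nat (n choose s)) (coeff p n)) (n - s)) s)"

text \<open>A module \<open>P\<close> is given by its scalar multiplication \<open>scP\<close> and \<open>H\<close>-action \<open>actH\<close>;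
 a pseudoproduct \<open>pp u v \<in> H\<otimes>H\<otimes>P\<close> is a representative of \<open>u*v \<in> H\<otimes>H\<otimes>\<^sub>HP\<close>.\<close>

inductive_set kspan :: "('k \<Rightarrow> 'v \<Rightarrow> 'v) \<Rightarrow> 'v::ab_group_add set \<Rightarrow> 'v set"
  for sc :: "'k \<Rightarrow> 'v \<Rightarrow> 'v" and S :: "'v set" where
  kspan_zero: "0 \<in> kspan sc S"
| kspan_gen: "x \<in> S \<Longrightarrow> x \<in> kspan sc S"
| kspan_add: "x \<in> kspan sc S \<Longrightarrow> y \<in> kspan sc S \<Longrightarrow> x + y \<in> kspan sc S"
| kspan_scale: "x \<in> kspan sc S \<Longrightarrow> sc c x \<in> kspan sc S"

definition tensor2 :: "('k::field \<Rightarrow> 'p::zero \<Rightarrow> 'p) \<Rightarrow> 'k poly poly \<Rightarrow> 'p \<Rightarrow> 'p poly poly" where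
  "tensor2 scP F m = map_poly (map_poly (\<lambda>c. scP c m)) F"

definition tensor3 :: "('k::field \<Rightarrow> 'p::zero \<Rightarrow> 'p) \<Rightarrow> 'k poly poly poly \<Rightarrow> 'p \<Rightarrow> 'p poly poly poly" where
  "tensor3 scP F m = map_poly (map_poly (map_poly (\<lambda>c. scP c m))) F"

definition rel2 :: "('k::field \<Rightarrow> 'p::ab_group_add \<Rightarrow> 'p) \<Rightarrow> ('k poly \<Rightarrow> 'p \<Rightarrow> 'p) \<Rightarrow> 'p poly poly set" where
  "rel2 scP actH = {tensor2 scP (F * Delta2 h) m - tensor2 scP F (actH h m) | F h m. True}"

definition rel3 :: "('k::field \<Rightarrow> 'p::ab_group_add \<Rightarrow> 'p) \<Rightarrow> ('k poly \<Rightarrow> 'p \<Rightarrow> 'p) \<Rightarrow> 'p poly poly poly set" where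
  "rel3 scP actH = {tensor3 scP (F * Delta3 h) m - tensor3 scP F (actH h m) | F h m. True}"

definition eqH2 :: "('k::field \<Rightarrow> 'p::ab_group_add \<Rightarrow> 'p) \<Rightarrow> ('k poly \<Rightarrow> 'p \<Rightarrow> 'p) \<Rightarrow> 'p poly poly \<Rightarrow> 'p poly poly \<Rightarrow> bool" where
  "eqH2 scP actH X Y \<longleftrightarrow> X - Y \<in> kspan (\<lambda>c. map_poly (map_poly (scP c))) (rel2 scP actH)"

definition eqH3 :: "('k::field \<Rightarrow> 'p::ab_group_add \<Rightarrow> 'p) \<Rightarrow> ('k poly \<Rightarrow> 'p \<Rightarrow> 'p) \<Rightarrow> 'p poly poly poly \<Rightarrow> 'p poly poly poly \<Rightarrow> bool" where
  "eqH3 scP actH X Y \<longleftrightarrow> X - Y \<in> kspan (\<lambda>c. map_poly (map_poly (map_poly (scP c)))) (rel3 scP actH)"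

definition sum2 :: "'v::zero poly poly \<Rightarrow> (nat \<Rightarrow> nat \<Rightarrow> 'v \<Rightarrow> 'w::comm_monoid_add) \<Rightarrow> 'w" where
  "sum2 X f = (\<Sum>i\<le>degree X. \<Sum>j\<le>degree (coeff X i). f i j (coeff (coeff X i) j))"

definition act2 :: "('k::field \<Rightarrow> 'p::comm_monoid_add \<Rightarrow> 'p) \<Rightarrow> 'k poly poly \<Rightarrow> 'p poly poly \<Rightarrow> 'p poly poly" where
  "act2 scP F X = sum2 X (\<lambda>i j m. tensor2 scP (F * mon2 i j) m)"

text \<open>Expanded pseudoproducts: \<open>(u*v)*w\<close> from a representative \<open>X\<close> of \<open>u*v\<close>
 (\<open>(F\<otimes>\<^sub>Hm)*(1\<otimes>\<^sub>Hw) = \<Sum> F\<Delta>(f)\<otimes>g\<otimes>\<^sub>Hz\<close>) and \<open>u*(v*w)\<close> from a representative \<open>Y\<close> of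
 \<open>v*w\<close> (\<open>(1\<otimes>\<^sub>Hu)*(G\<otimes>\<^sub>Hy) = \<Sum> f\<otimes>G\<Delta>(g)\<otimes>\<^sub>Hz\<close>).\<close>
definition lprod :: "('k::field \<Rightarrow> 'p::comm_monoid_add \<Rightarrow> 'p) \<Rightarrow> ('p \<Rightarrow> 'p \<Rightarrow> 'p poly poly)
                     \<Rightarrow> 'p poly poly \<Rightarrow> 'p \<Rightarrow> 'p poly poly poly" where
  "lprod scP pp X w = sum2 X (\<lambda>i j m. sum2 (pp m w) (\<lambda>a b z.
       tensor3 scP (tensHH_H (mon2 i j * Delta2 (monom 1 a)) (monom 1 b)) z))"

definition rprod :: "('k::field \<Rightarrow> 'p::comm_monoid_add \<Rightarrow> 'p) \<Rightarrow> ('p \<Rightarrow> 'p \<Rightarrow> 'p poly poly)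
                     \<Rightarrow> 'p \<Rightarrow> 'p poly poly \<Rightarrow> 'p poly poly poly" where
  "rprod scP pp u Y = sum2 Y (\<lambda>a b y. sum2 (pp u y) (\<lambda>c d z.
       tensor3 scP (tensH_HH (monom 1 c) (mon2 a b * Delta2 (monom 1 d))) z))"

definition swap12 :: "'v::comm_monoid_add poly poly \<Rightarrow> 'v poly poly" where
  "swap12 X = sum2 X (\<lambda>i j z. monom (monom z i) j)"

definition sigma12 :: "'p::comm_monoid_add poly poly poly \<Rightarrow> 'p poly poly poly" where
  "sigma12 X = swap12 X"

definition sigma23 :: "'p::comm_monoid_add poly poly poly \<Rightarrow> 'p poly poly poly" where
  "sigma23 X = map_poly swap12 X"

definition H_pseudoalgebra ::
  "('k::field \<Rightarrow> 'p::ab_group_add \<Rightarrow> 'p) \<Rightarrow> ('k poly \<Rightarrow> 'p \<Rightarrow> 'p) \<Rightarrow> ('p \<Rightarrow> 'p \<Rightarrow> 'p poly poly) \<Rightarrow> bool" where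
  "H_pseudoalgebra scP actH pp \<longleftrightarrow>
     (\<forall>h g u. actH (h + g) u = actH h u + actH g u) \<and>
     (\<forall>h u v. actH h (u + v) = actH h u + actH h v) \<and>
     (\<forall>h g u. actH (h * g) u = actH h (actH g u)) \<and>
     (\<forall>c u. actH [:c:] u = scP c u) \<and>
     (\<forall>u u' v. eqH2 scP actH (pp (u + u') v) (pp u v + pp u' v)) \<and>
     (\<forall>u v v'. eqH2 scP actH (pp u (v + v')) (pp u v + pp u v')) \<and>
     (\<forall>h g u v. eqH2 scP actH (pp (actH h u) (actH g v)) (act2 scP (tensHH h g) (pp u v)))"

definition alternative_pseudo ::
  "('k::field \<Rightarrow> 'p::ab_group_add \<Rightarrow> 'p) \<Rightarrow> ('k poly \<Rightarrow> 'p \<Rightarrow> 'p) \<Rightarrow> ('p \<Rightarrow> 'p \<Rightarrow> 'p poly poly) \<Rightarrow> bool" where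
  "alternative_pseudo scP actH pp \<longleftrightarrow>
     (\<forall>u v w. eqH3 scP actH (rprod scP pp u (pp v w) - lprod scP pp (pp u v) w)
                 (sigma12 (lprod scP pp (pp v u) w - rprod scP pp v (pp u w)))) \<and>
     (\<forall>u v w. eqH3 scP actH (rprod scP pp u (pp v w) - lprod scP pp (pp u v) w)
                 (sigma23 (lprod scP pp (pp u w) v - rprod scP pp u (pp w v))))"

definition pseudo_assoc_on ::
  "('k::field \<Rightarrow> 'p::ab_group_add \<Rightarrow> 'p) \<Rightarrow> ('k poly \<Rightarrow> 'p \<Rightarrow> 'p) \<Rightarrow> ('p \<Rightarrow> 'p \<Rightarrow> 'p poly poly) \<Rightarrow> 'p set \<Rightarrow> bool" where
  "pseudo_assoc_on scP actH pp S \<longleftrightarrow>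
     (\<forall>u\<in>S. \<forall>v\<in>S. \<forall>w\<in>S. eqH3 scP actH (lprod scP pp (pp u v) w) (rprod scP pp u (pp v w)))"

definition pseudo_subalgebra ::
  "('k::field \<Rightarrow> 'p::ab_group_add \<Rightarrow> 'p) \<Rightarrow> ('k poly \<Rightarrow> 'p \<Rightarrow> 'p) \<Rightarrow> ('p \<Rightarrow> 'p \<Rightarrow> 'p poly poly) \<Rightarrow> 'p set \<Rightarrow> bool" where
  "pseudo_subalgebra scP actH pp S \<longleftrightarrow>
     0 \<in> S \<and> (\<forall>u\<in>S. \<forall>v\<in>S. u + v \<in> S) \<and> (\<forall>c. \<forall>u\<in>S. scP c u \<in> S) \<and>
     (\<forall>h. \<forall>u\<in>S. actH h u \<in> S) \<and>
     (\<forall>u\<in>S. \<forall>v\<in>S. \<exists>X. (\<forall>i j. coeff (coeff X i) j \<in> S) \<and> eqH2 scP actH (pp u v) X)"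

definition generated_subalgebra ::
  "('k::field \<Rightarrow> 'p::ab_group_add \<Rightarrow> 'p) \<Rightarrow> ('k poly \<Rightarrow> 'p \<Rightarrow> 'p) \<Rightarrow> ('p \<Rightarrow> 'p \<Rightarrow> 'p poly poly) \<Rightarrow> 'p set \<Rightarrow> 'p set" where
  "generated_subalgebra scP actH pp G = \<Inter>{S. pseudo_subalgebra scP actH pp S \<and> G \<subseteq> S}"

definition scaleP :: "('k \<Rightarrow> 'a::zero \<Rightarrow> 'a) \<Rightarrow> 'k \<Rightarrow> 'a poly poly \<Rightarrow> 'a poly poly" where
  "scaleP sc c m = map_poly (scaleAt sc c) m"

definition actP :: "('k::field \<Rightarrow> 'a::comm_monoid_add \<Rightarrow> 'a) \<Rightarrow> 'k poly \<Rightarrow> 'a poly poly \<Rightarrow> 'a poly poly" where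
  "actP sc h m = (\<Sum>j\<le>degree h. \<Sum>i\<le>degree m. monom (scaleAt sc (coeff h j) (coeff m i)) (i + j))"

definition pprodP :: "('k::field \<Rightarrow> 'a::comm_monoid_add \<Rightarrow> 'a) \<Rightarrow> ('a \<Rightarrow> 'a \<Rightarrow> 'a)
                      \<Rightarrow> 'a poly poly \<Rightarrow> 'a poly poly \<Rightarrow> 'a poly poly poly poly" where
  "pprodP sc mul x y =
     (\<Sum>i\<le>degree x. \<Sum>j\<le>degree y.
        \<Sum>s\<le>degree (coactAt sc (coeff x i)). \<Sum>r\<le>degree (coactAt sc (coeff y j)).
          monom (monom (monom (mulAt mul (coeff (coactAt sc (coeff x i)) s)
                                         (coeff (coactAt sc (coeff y j)) r)) 0) (j + s)) (i + r))"

end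

theory Submission
  imports Defs
begin

definition LE :: "(nat \<Rightarrow> 'b::zero \<Rightarrow> 'c::comm_monoid_add) \<Rightarrow> 'b poly \<Rightarrow> 'c" where
  "LE F p = (\<Sum>i\<le>degree p. F i (coeff p i))"

lemma LE_ext:
  assumes "\<And>i. F i 0 = 0" "degree p \<le> N"
  shows "LE F p = (\<Sum>i\<le>N. F i (coeff p i))"
  unfolding LE_def
  by (rule sum.mono_neutral_left) (use assms in \<open>auto simp: coeff_eq_0\<close>)

lemma LE_add:
  fixes F :: "nat \<Rightarrow> 'b::comm_monoid_add \<Rightarrow> 'c::comm_monoid_add"
  assumes "\<And>i x y. F i (x + y) = F i x + F i y" "\<And>i. F i 0 = 0"
  shows "LE F (p + q) = LE F p + LE F q"
proof -
  let ?N = "max (degree p) (degree q)"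
  have "LE F (p + q) = (\<Sum>i\<le>?N. F i (coeff (p + q) i))"
    by (rule LE_ext) (simp_all add: assms degree_add_le_max)
  also have "\<dots> = (\<Sum>i\<le>?N. F i (coeff p i)) + (\<Sum>i\<le>?N. F i (coeff q i))"
    by (simp add: assms sum.distrib)
  also have "\<dots> = LE F p + LE F q"
    by (simp add: LE_ext[symmetric] assms)
  finally show ?thesis .
qed

lemma LE_monom:
  assumes "\<And>i. F i 0 = 0"
  shows "LE F (monom a n) = F n a"
proof -
  have "LE F (monom a n) = (\<Sum>i\<le>n. F i (coeff (monom a n) i))"
    by (rule LE_ext) (use assms in \<open>auto simp: degree_monom_le\<close>)
  also have "\<dots> = (\<Sum>i\<le>n. if i = n then F n a else 0)"
    by (rule sum.cong) (auto simp: assms)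
  finally show ?thesis by simp
qed

lemma LE_0: "LE F 0 = F 0 0"
  by (simp add: LE_def)

lemma LE_sum:
  fixes F :: "nat \<Rightarrow> 'b::comm_monoid_add \<Rightarrow> 'c::comm_monoid_add"
  assumes "\<And>i x y. F i (x + y) = F i x + F i y" "\<And>i. F i 0 = 0"
  shows "LE F (\<Sum>x\<in>A. g x) = (\<Sum>x\<in>A. LE F (g x))"
proof (induct A rule: infinite_finite_induct)
  case (infinite A) then show ?case by (simp add: LE_0 assms)
next
  case empty then show ?case by (simp add: LE_0 assms)
next
  case (insert x F) then show ?case by (simp add: LE_add assms)
qed

lemma LE_fun_add: "LE (\<lambda>i a. F i a + G i a) p = LE F p + LE G p"
  by (simp add: LE_def sum.distrib)

lemma LE_fun_sum: "LE (\<lambda>i a. \<Sum>x\<in>A. F x i a) p = (\<Sum>x\<in>A. LE (F x) p)"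
  unfolding LE_def by (rule sum.swap)

lemma poly_induct_monom:
  assumes "\<And>a n. P (monom a n)" "\<And>p q. P p \<Longrightarrow> P q \<Longrightarrow> P (p + q)"
  shows "P p"
proof -
  have "P (\<Sum>i\<in>A. monom (coeff p i) i)" if "finite A" for A
    using that
  proof (induct A rule: finite_induct)
    case empty
    then show ?case using assms(1)[of 0 0] by simp
  next
    case (insert x F)
    then show ?case using assms by simp
  qed
  from this[of "{..degree p}"] show ?thesis by (simp add: poly_as_sum_of_monoms)
qed

lemma poly2_induct_monom:
  assumes "\<And>a n i. P (monom (monom a n) i)" "\<And>p q. P p \<Longrightarrow> P q \<Longrightarrow> P (p + q)"
  shows "P p"
proof (rule poly_induct_monom[where P=P])
  fix q i show "P (monom q i)"
    by (rule poly_induct_monom[where P="\<lambda>q. P (monom q i)"])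
      (use assms in \<open>auto simp: add_monom[symmetric]\<close>)
qed (use assms in auto)

lemma map_poly_add_hom:
  assumes "\<And>x y. f (x + y) = f x + f y" "f 0 = 0"
  shows "map_poly f (p + q) = map_poly f p + map_poly f q"
  by (rule poly_eqI) (simp add: coeff_map_poly assms)

lemma map_poly_sum_hom:
  assumes "\<And>x y. f (x + y) = f x + f y" "f 0 = 0"
  shows "map_poly f (\<Sum>x\<in>A. g x) = (\<Sum>x\<in>A. map_poly f (g x))"
  by (induct A rule: infinite_finite_induct) (simp_all add: map_poly_add_hom assms)

definition is_hom :: "('a::comm_semiring_1 \<Rightarrow> 'b::comm_semiring_1) \<Rightarrow> bool" where
  "is_hom f \<longleftrightarrow> (\<forall>x y. f (x + y) = f x + f y) \<and> (\<forall>x y. f (x * y) = f x * f y) \<and> f 0 = 0 \<and> f 1 = 1"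

lemma is_homD:
  assumes "is_hom f"
  shows "f (x + y) = f x + f y" "f (x * y) = f x * f y" "f 0 = 0" "f 1 = 1"
  using assms by (auto simp: is_hom_def)

lemma hom_power: "is_hom f \<Longrightarrow> f (x ^ n) = f x ^ n"
  by (induct n) (auto simp: is_homD)

lemma hom_sum: "is_hom f \<Longrightarrow> f (\<Sum>x\<in>A. g x) = (\<Sum>x\<in>A. f (g x))"
  by (induct A rule: infinite_finite_induct) (auto simp: is_homD)

lemma hom_of_nat: "is_hom f \<Longrightarrow> f (of_nat n) = of_nat n"
  by (induct n) (auto simp: is_homD)

lemma hom_uminus:
  fixes f :: "'a::comm_ring_1 \<Rightarrow> 'b::comm_ring_1"
  assumes "is_hom f" shows "f (- x) = - f x"
proof -
  have "f (- x) + f x = 0" using is_homD(1)[OF assms, of "-x" x] is_homD(3)[OF assms] by simp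
  then show ?thesis by (simp add: eq_neg_iff_add_eq_0)
qed

lemma hom_diff:
  fixes f :: "'a::comm_ring_1 \<Rightarrow> 'b::comm_ring_1"
  assumes "is_hom f" shows "f (x - y) = f x - f y"
proof -
  have "f (x - y) = f (x + - y)" by simp
  also have "\<dots> = f x + f (- y)" by (rule is_homD(1)[OF assms])
  finally show ?thesis by (simp add: hom_uminus[OF assms])
qed

lemma map_poly_mult_hom:
  assumes "is_hom f"
  shows "map_poly f (p * q) = map_poly f p * map_poly f q"
proof (induct p)
  case 0 then show ?case by simp
next
  case (pCons a p)
  have "map_poly f (pCons a p * q) = map_poly f (smult a q) + map_poly f (pCons 0 (p * q))"
    by (simp add: map_poly_add_hom is_homD[OF assms])
  also have "\<dots> = smult (f a) (map_poly f q) + pCons 0 (map_poly f p * map_poly f q)"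
    by (simp add: map_poly_smult map_poly_pCons is_homD[OF assms] pCons.hyps)
  also have "\<dots> = map_poly f (pCons a p) * map_poly f q"
    by (simp add: map_poly_pCons is_homD[OF assms])
  finally show ?case .
qed

lemma is_hom_map_poly: "is_hom f \<Longrightarrow> is_hom (map_poly f)"
  unfolding is_hom_def
  apply (intro conjI allI)
     apply (rule map_poly_add_hom; simp)
    apply (rule map_poly_mult_hom; simp add: is_hom_def)
   apply simp
  apply simp
  done

lemma is_hom_const: "is_hom (\<lambda>c. [:c:])"
  unfolding is_hom_def by (simp add: one_pCons mult.commute)

lemma is_hom_comp: "is_hom f \<Longrightarrow> is_hom g \<Longrightarrow> is_hom (\<lambda>x. f (g x))"
  unfolding is_hom_def by auto

lemma is_hom_poly: "is_hom (\<lambda>p. poly p x)"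
  unfolding is_hom_def by simp


lemma add_hom_sum:
  fixes g :: "'b::comm_monoid_add \<Rightarrow> 'c::comm_monoid_add"
  assumes "\<And>x y. g (x + y) = g x + g y" "g 0 = 0"
  shows "g (\<Sum>x\<in>A. f x) = (\<Sum>x\<in>A. g (f x))"
  by (induct A rule: infinite_finite_induct) (simp_all add: assms)

lemma LE_zero_fun: "LE (\<lambda>i a. 0) p = 0"
  by (simp add: LE_def)

lemma LE_comp:
  fixes g :: "'b::comm_monoid_add \<Rightarrow> 'c::comm_monoid_add"
  assumes "\<And>x y. g (x + y) = g x + g y" "g 0 = 0"
  shows "g (LE F p) = LE (\<lambda>i a. g (F i a)) p"
  unfolding LE_def by (rule add_hom_sum[OF assms])

lemma LE_map_poly:
  assumes "f 0 = 0" "\<And>i. G i 0 = 0"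
  shows "LE G (map_poly f p) = LE (\<lambda>i a. G i (f a)) p"
proof -
  have "LE G (map_poly f p) = (\<Sum>i\<le>degree p. G i (coeff (map_poly f p) i))"
    by (rule LE_ext) (simp_all add: assms map_poly_degree_leq)
  then show ?thesis by (simp add: LE_def coeff_map_poly assms)
qed

lemma LE_cong: "(\<And>i a. F i a = G i a) \<Longrightarrow> LE F p = LE G p"
  by (simp add: LE_def)

definition ladd :: "(nat \<Rightarrow> 'b::comm_monoid_add \<Rightarrow> 'c::comm_monoid_add) \<Rightarrow> bool" where
  "ladd G \<longleftrightarrow> (\<forall>i a a'. G i (a + a') = G i a + G i a') \<and> (\<forall>i. G i 0 = 0)"

lemma laddD: "ladd G \<Longrightarrow> G i (a + a') = G i a + G i a'" "ladd G \<Longrightarrow> G i 0 = 0"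
  by (auto simp: ladd_def)

lemma LE_add': "ladd G \<Longrightarrow> LE G (p + q) = LE G p + LE G q"
  by (rule LE_add) (auto simp: ladd_def)

lemma LE_monom': "ladd G \<Longrightarrow> LE G (monom a n) = G n a"
  by (rule LE_monom) (auto simp: ladd_def)

lemma LE_sum': "ladd G \<Longrightarrow> LE G (\<Sum>x\<in>A. g x) = (\<Sum>x\<in>A. LE G (g x))"
  by (rule LE_sum) (auto simp: ladd_def)

lemma LE_0': "ladd G \<Longrightarrow> LE G 0 = 0"
  by (simp add: LE_0 ladd_def)

definition BL :: "(nat \<Rightarrow> nat \<Rightarrow> 'b::zero \<Rightarrow> 'c::zero \<Rightarrow> 'd::comm_monoid_add) \<Rightarrow> 'b poly \<Rightarrow> 'c poly \<Rightarrow> 'd" where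
  "BL F p q = LE (\<lambda>i a. LE (\<lambda>j b. F i j a b) q) p"

definition biadd :: "(nat \<Rightarrow> nat \<Rightarrow> 'b::comm_monoid_add \<Rightarrow> 'c::comm_monoid_add \<Rightarrow> 'd::comm_monoid_add) \<Rightarrow> bool" where
  "biadd F \<longleftrightarrow> (\<forall>i j a a' b. F i j (a + a') b = F i j a b + F i j a' b) \<and>
               (\<forall>i j a b b'. F i j a (b + b') = F i j a b + F i j a b') \<and>
               (\<forall>i j b. F i j 0 b = 0) \<and> (\<forall>i j a. F i j a 0 = 0)"

lemma BL_ladd1:
  assumes "biadd F" shows "ladd (\<lambda>i a. LE (\<lambda>j b. F i j a b) q)"
  unfolding ladd_def
proof (intro conjI allI)
  fix i a a'
  show "LE (\<lambda>j b. F i j (a + a') b) q = LE (\<lambda>j b. F i j a b) q + LE (\<lambda>j b. F i j a' b) q"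
    by (subst LE_fun_add[symmetric], rule LE_cong) (use assms in \<open>simp add: biadd_def\<close>)
next
  fix i
  show "LE (\<lambda>j b. F i j 0 b) q = 0"
    by (subst LE_zero_fun[symmetric], rule LE_cong) (use assms in \<open>simp add: biadd_def\<close>)
qed

lemma BL_ladd2: "biadd F \<Longrightarrow> ladd (\<lambda>j b. F i j a b)"
  unfolding ladd_def biadd_def by simp

lemma BL_add1: "biadd F \<Longrightarrow> BL F (p + p') q = BL F p q + BL F p' q"
  unfolding BL_def by (rule LE_add'[OF BL_ladd1])

lemma BL_add2: "biadd F \<Longrightarrow> BL F p (q + q') = BL F p q + BL F p q'"
  unfolding BL_def by (simp add: LE_add'[OF BL_ladd2] LE_fun_add)

lemma BL_monom:
  assumes "biadd F" shows "BL F (monom a i) (monom b j) = F i j a b"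
proof -
  have "BL F (monom a i) (monom b j) = LE (\<lambda>j' b'. F i j' a b') (monom b j)"
    unfolding BL_def by (rule LE_monom'[OF BL_ladd1[OF assms]])
  also have "\<dots> = F i j a b" by (rule LE_monom'[OF BL_ladd2[OF assms]])
  finally show ?thesis .
qed

lemma BL_sum1: "biadd F \<Longrightarrow> BL F (\<Sum>x\<in>A. g x) q = (\<Sum>x\<in>A. BL F (g x) q)"
  unfolding BL_def by (rule LE_sum'[OF BL_ladd1])

lemma BL_sum2: "biadd F \<Longrightarrow> BL F p (\<Sum>x\<in>A. g x) = (\<Sum>x\<in>A. BL F p (g x))"
  unfolding BL_def by (simp add: LE_sum'[OF BL_ladd2] LE_fun_sum)

lemma BL_01: "biadd F \<Longrightarrow> BL F 0 q = 0"
  unfolding BL_def by (rule LE_0'[OF BL_ladd1])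

lemma BL_02: "biadd F \<Longrightarrow> BL F p 0 = 0"
  unfolding BL_def by (simp add: LE_0'[OF BL_ladd2] LE_zero_fun)

lemma map_poly_fun_add:
  assumes "f 0 = 0" "g 0 = 0"
  shows "map_poly (\<lambda>x. f x + g x) p = map_poly f p + map_poly g p"
  by (rule poly_eqI) (simp add: coeff_map_poly assms)

lemma map_poly_fun_diff:
  fixes f g :: "'a::zero \<Rightarrow> 'b::ab_group_add"
  assumes "f 0 = 0" "g 0 = 0"
  shows "map_poly (\<lambda>x. f x - g x) p = map_poly f p - map_poly g p"
  by (rule poly_eqI) (simp add: coeff_map_poly assms)

lemma map_poly_fun_sum:
  assumes "\<And>x. x \<in> A \<Longrightarrow> f x 0 = 0"
  shows "map_poly (\<lambda>c. \<Sum>x\<in>A. f x c) p = (\<Sum>x\<in>A. map_poly (f x) p)"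
  by (rule poly_eqI) (simp add: coeff_map_poly assms coeff_sum)


locale NA =
  fixes sc :: "'k::field \<Rightarrow> 'a::ab_group_add \<Rightarrow> 'a" and mul :: "'a \<Rightarrow> 'a \<Rightarrow> 'a"
  assumes NA: "nonassoc_algebra sc mul"
begin

lemma sc_addl: "sc (c + d) u = sc c u + sc d u" using NA by (simp add: nonassoc_algebra_def)
lemma sc_addr: "sc c (u + v) = sc c u + sc c v" using NA by (simp add: nonassoc_algebra_def)
lemma sc_mult: "sc (c * d) u = sc c (sc d u)" using NA by (simp add: nonassoc_algebra_def)
lemma sc_one [simp]: "sc 1 u = u" using NA by (simp add: nonassoc_algebra_def)
lemma mul_addl: "mul (u + v) w = mul u w + mul v w" using NA by (simp add: nonassoc_algebra_def)
lemma mul_addr: "mul u (v + w) = mul u v + mul u w" using NA by (simp add: nonassoc_algebra_def)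
lemma mul_scl: "mul (sc c u) v = sc c (mul u v)" using NA by (simp add: nonassoc_algebra_def)
lemma mul_scr: "mul u (sc c v) = sc c (mul u v)" using NA by (simp add: nonassoc_algebra_def)

lemma sc_0r [simp]: "sc c 0 = 0"
  using sc_addr[of c 0 0] by simp
lemma sc_0l [simp]: "sc 0 u = 0"
  using sc_addl[of 0 0 u] by simp
lemma mul_0l [simp]: "mul 0 v = 0"
  using mul_addl[of 0 0 v] by simp
lemma mul_0r [simp]: "mul u 0 = 0"
  using mul_addr[of u 0 0] by simp
lemma sc_neg: "sc c (- u) = - sc c u"
  using sc_addr[of c u "-u"] by (simp add: eq_neg_iff_add_eq_0 add.commute)
lemma sc_diff: "sc c (u - v) = sc c u - sc c v"
  using sc_addr[of c u "-v"] by (simp add: sc_neg)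
lemma mul_negl: "mul (- u) v = - mul u v"
  using mul_addl[of u "-u" v] by (simp add: eq_neg_iff_add_eq_0 add.commute)
lemma mul_negr: "mul u (- v) = - mul u v"
  using mul_addr[of u v "-v"] by (simp add: eq_neg_iff_add_eq_0 add.commute)
lemma mul_diffl: "mul (u - v) w = mul u w - mul v w"
  using mul_addl[of u "-v" w] by (simp add: mul_negl)
lemma mul_diffr: "mul u (v - w) = mul u v - mul u w"
  using mul_addr[of u v "-w"] by (simp add: mul_negr)
lemma sc_comm: "sc c (sc d u) = sc d (sc c u)"
  by (metis sc_mult mult.commute)
lemma sc_sum: "sc c (\<Sum>x\<in>A. f x) = (\<Sum>x\<in>A. sc c (f x))"
  by (rule add_hom_sum) (simp_all add: sc_addr)
lemma sc_suml: "sc (\<Sum>x\<in>A. f x) u = (\<Sum>x\<in>A. sc (f x) u)"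
  by (induct A rule: infinite_finite_induct) (simp_all add: sc_addl)

lemma sc_of_nat_mult: "sc (of_nat (m * n)) (mul u v) = mul (sc (of_nat m) u) (sc (of_nat n) v)"
  by (simp add: mul_scl mul_scr sc_mult) (rule sc_comm)

lemma scaleAt_monom: "scaleAt sc c (monom a n) = monom (sc c a) n"
  by (simp add: scaleAt_def map_poly_monom)
lemma scaleAt_add: "scaleAt sc c (p + q) = scaleAt sc c p + scaleAt sc c q"
  unfolding scaleAt_def by (rule map_poly_add_hom) (simp_all add: sc_addr)
lemma scaleAt_addl: "scaleAt sc (c + d) p = scaleAt sc c p + scaleAt sc d p"
proof -
  have "sc (c + d) = (\<lambda>x. sc c x + sc d x)" by (rule ext) (simp add: sc_addl)
  then show ?thesis unfolding scaleAt_def by (simp add: map_poly_fun_add)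
qed
lemma scaleAt_mult: "scaleAt sc (c * d) p = scaleAt sc c (scaleAt sc d p)"
proof -
  have "sc (c * d) = (\<lambda>x. sc c (sc d x))" by (rule ext) (simp add: sc_mult)
  then show ?thesis unfolding scaleAt_def by (simp add: map_poly_map_poly o_def)
qed
lemma scaleAt_one [simp]: "scaleAt sc 1 p = p"
proof -
  have "sc 1 = (\<lambda>x. x)" by (rule ext) simp
  then show ?thesis unfolding scaleAt_def by simp
qed
lemma scaleAt_0r [simp]: "scaleAt sc c 0 = 0"
  unfolding scaleAt_def by simp
lemma scaleAt_0l [simp]: "scaleAt sc 0 p = 0"
  unfolding scaleAt_def by (rule poly_eqI) (simp add: coeff_map_poly)
lemma scaleAt_diff: "scaleAt sc c (p - q) = scaleAt sc c p - scaleAt sc c q"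
  unfolding scaleAt_def by (rule poly_eqI) (simp add: coeff_map_poly sc_diff)
lemma coeff_scaleAt: "coeff (scaleAt sc c p) n = sc c (coeff p n)"
  unfolding scaleAt_def by (simp add: coeff_map_poly)

lemma biadd_mulAt: "biadd (\<lambda>i j a b. monom (mul a b) (i + j))"
  unfolding biadd_def by (simp add: mul_addl mul_addr add_monom)

lemma mulAt_BL: "mulAt mul p q = BL (\<lambda>i j a b. monom (mul a b) (i + j)) p q"
  by (simp add: mulAt_def BL_def LE_def)

lemma mulAt_add1: "mulAt mul (p + p') q = mulAt mul p q + mulAt mul p' q"
  by (simp add: mulAt_BL BL_add1[OF biadd_mulAt])
lemma mulAt_add2: "mulAt mul p (q + q') = mulAt mul p q + mulAt mul p q'"
  by (simp add: mulAt_BL BL_add2[OF biadd_mulAt])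
lemma mulAt_01 [simp]: "mulAt mul 0 q = 0"
  by (simp add: mulAt_BL BL_01[OF biadd_mulAt])
lemma mulAt_02 [simp]: "mulAt mul p 0 = 0"
  by (simp add: mulAt_BL BL_02[OF biadd_mulAt])
lemma mulAt_monom: "mulAt mul (monom a i) (monom b j) = monom (mul a b) (i + j)"
  by (simp add: mulAt_BL BL_monom[OF biadd_mulAt])

definition coF :: "nat \<Rightarrow> 'a \<Rightarrow> 'a poly poly" where
  "coF n a = (\<Sum>s\<le>n. monom (monom (sc (of_nat (n choose s)) a) (n - s)) s)"

lemma ladd_coF: "ladd coF"
  unfolding ladd_def coF_def by (simp add: sc_addr add_monom[symmetric] sum.distrib)

lemma coact_LE: "coactAt sc p = LE coF p"
  by (simp add: coactAt_def LE_def coF_def)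

lemma coact_add: "coactAt sc (p + q) = coactAt sc p + coactAt sc q"
  by (simp add: coact_LE LE_add'[OF ladd_coF])
lemma coact_0 [simp]: "coactAt sc 0 = 0"
  by (simp add: coact_LE LE_0'[OF ladd_coF])
lemma coact_monom: "coactAt sc (monom a n) = coF n a"
  by (simp add: coact_LE LE_monom'[OF ladd_coF])

definition ppG :: "nat \<Rightarrow> nat \<Rightarrow> nat \<Rightarrow> nat \<Rightarrow> 'a poly \<Rightarrow> 'a poly \<Rightarrow> 'a poly poly poly poly" where
  "ppG i j s r c1 c2 = monom (monom (monom (mulAt mul c1 c2) 0) (j + s)) (i + r)"

lemma biadd_ppG: "biadd (ppG i j)"
  unfolding biadd_def ppG_def by (simp add: mulAt_add1 mulAt_add2 add_monom)

definition ppF :: "nat \<Rightarrow> nat \<Rightarrow> 'a poly \<Rightarrow> 'a poly \<Rightarrow> 'a poly poly poly poly" where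
  "ppF i j u v = BL (ppG i j) (coactAt sc u) (coactAt sc v)"

lemma biadd_ppF: "biadd ppF"
  unfolding biadd_def ppF_def
  by (simp add: coact_add BL_add1[OF biadd_ppG] BL_add2[OF biadd_ppG] BL_01[OF biadd_ppG] BL_02[OF biadd_ppG])

lemma pp_BL: "pprodP sc mul x y = BL ppF x y"
  by (simp add: pprodP_def BL_def LE_def ppF_def ppG_def)

lemma pp_add1: "pprodP sc mul (x + x') y = pprodP sc mul x y + pprodP sc mul x' y"
  by (simp add: pp_BL BL_add1[OF biadd_ppF])
lemma pp_add2: "pprodP sc mul x (y + y') = pprodP sc mul x y + pprodP sc mul x y'"
  by (simp add: pp_BL BL_add2[OF biadd_ppF])
lemma pp_01 [simp]: "pprodP sc mul 0 y = 0"
  by (simp add: pp_BL BL_01[OF biadd_ppF])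
lemma pp_02 [simp]: "pprodP sc mul x 0 = 0"
  by (simp add: pp_BL BL_02[OF biadd_ppF])

lemma pp_monom:
  "pprodP sc mul (monom (monom a n) i) (monom (monom b m) j) =
    (\<Sum>s\<le>n. \<Sum>r\<le>m. monom (monom (monom (monom (sc (of_nat ((n choose s) * (m choose r))) (mul a b))
        (n - s + (m - r))) 0) (j + s)) (i + r))"
proof -
  have "pprodP sc mul (monom (monom a n) i) (monom (monom b m) j) = BL (ppG i j) (coF n a) (coF m b)"
    by (simp add: pp_BL BL_monom[OF biadd_ppF] ppF_def coact_monom)
  also have "\<dots> = (\<Sum>s\<le>n. \<Sum>r\<le>m. ppG i j s r (monom (sc (of_nat (n choose s)) a) (n - s))
                                          (monom (sc (of_nat (m choose r)) b) (m - r)))"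
    by (simp add: coF_def BL_sum1[OF biadd_ppG] BL_sum2[OF biadd_ppG] BL_monom[OF biadd_ppG])
       (rule sum.swap)
  also have "\<dots> = (\<Sum>s\<le>n. \<Sum>r\<le>m. monom (monom (monom (monom (sc (of_nat ((n choose s) * (m choose r))) (mul a b))
        (n - s + (m - r))) 0) (j + s)) (i + r))"
    by (intro sum.cong refl) (simp add: ppG_def mulAt_monom sc_of_nat_mult del: of_nat_mult)
  finally show ?thesis .
qed

end

definition is_add :: "('b::comm_monoid_add \<Rightarrow> 'c::comm_monoid_add) \<Rightarrow> bool" where
  "is_add h \<longleftrightarrow> (\<forall>x y. h (x + y) = h x + h y) \<and> h 0 = 0"

lemma is_addD: "is_add h \<Longrightarrow> h (x + y) = h x + h y" "is_add h \<Longrightarrow> h 0 = 0"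
  by (auto simp: is_add_def)

lemma is_add_map_poly: "is_add h \<Longrightarrow> is_add (map_poly h)"
  unfolding is_add_def by (auto intro: map_poly_add_hom)

lemma is_add_diff:
  fixes h :: "'b::ab_group_add \<Rightarrow> 'c::ab_group_add"
  assumes "is_add h" shows "h (x - y) = h x - h y"
proof -
  have "h (x - y) + h y = h x" using is_addD(1)[OF assms, of "x - y" y] by simp
  then show ?thesis by (simp add: eq_diff_eq)
qed

lemma is_add_sum: "is_add h \<Longrightarrow> h (\<Sum>x\<in>A. f x) = (\<Sum>x\<in>A. h (f x))"
  by (rule add_hom_sum) (auto simp: is_add_def)

definition sadd :: "(nat \<Rightarrow> nat \<Rightarrow> 'b::comm_monoid_add \<Rightarrow> 'c::comm_monoid_add) \<Rightarrow> bool" where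
  "sadd f \<longleftrightarrow> (\<forall>i j. is_add (f i j))"

lemma sum2_LE: "sum2 X f = LE (\<lambda>i Q. LE (\<lambda>j z. f i j z) Q) X"
  by (simp add: sum2_def LE_def)

lemma ladd_sum2_in: "sadd f \<Longrightarrow> ladd (\<lambda>j z. f i j z)"
  by (simp add: sadd_def ladd_def is_add_def)

lemma ladd_sum2_out: "sadd f \<Longrightarrow> ladd (\<lambda>i Q. LE (\<lambda>j z. f i j z) Q)"
  unfolding ladd_def by (simp add: LE_add'[OF ladd_sum2_in] LE_0'[OF ladd_sum2_in])

lemma sum2_add: "sadd f \<Longrightarrow> sum2 (X + Y) f = sum2 X f + sum2 Y f"
  by (simp add: sum2_LE LE_add'[OF ladd_sum2_out])

lemma sum2_0 [simp]: "sadd f \<Longrightarrow> sum2 0 f = 0"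
  by (simp add: sum2_LE LE_0'[OF ladd_sum2_out])

lemma sum2_sum: "sadd f \<Longrightarrow> sum2 (\<Sum>x\<in>A. g x) f = (\<Sum>x\<in>A. sum2 (g x) f)"
  by (simp add: sum2_LE LE_sum'[OF ladd_sum2_out])

lemma sum2_monom: "sadd f \<Longrightarrow> sum2 (monom (monom z j) i) f = f i j z"
  by (simp add: sum2_LE LE_monom'[OF ladd_sum2_out] LE_monom'[OF ladd_sum2_in])

lemma is_add_sum2: "sadd f \<Longrightarrow> is_add (\<lambda>X. sum2 X f)"
  by (simp add: is_add_def sum2_add)

lemma map_poly_mult_const:
  fixes f :: "'a::zero \<Rightarrow> 'b::comm_semiring_0"
  assumes "f 0 = 0"
  shows "map_poly f p * [:c:] = map_poly (\<lambda>x. f x * c) p"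
  by (rule poly_eqI) (simp add: coeff_map_poly assms mult.commute)

lemma map_poly_fun_add_ext:
  assumes "f 0 = 0" "g 0 = 0"
  shows "map_poly (\<lambda>x. f x + g x) = (\<lambda>p. map_poly f p + map_poly g p)"
  by (rule ext) (simp add: map_poly_fun_add assms)

lemma map_poly_zero_ext: "map_poly (\<lambda>x. 0) = (\<lambda>p. 0)"
  by (rule ext, rule poly_eqI) (simp add: coeff_map_poly)

lemma const_mult_poly: "[:c:] * p = map_poly (\<lambda>x. c * x) p"
  by (simp add: smult_conv_map_poly)

lemma monom_as_mult: "monom (c::'r::comm_semiring_1) n = [:c:] * monom 1 1 ^ n"
  by (simp add: monom_power mult_monom monom_0[symmetric])

lemma of_nat_const: "(of_nat n :: 'r::comm_semiring_1 poly) = [:of_nat n:]"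
  by (rule of_nat_poly)

context NA
begin

definition T5 :: "'k poly poly poly poly poly \<Rightarrow> 'a \<Rightarrow> 'a poly poly poly poly poly" where
  "T5 K z = map_poly (map_poly (map_poly (map_poly (map_poly (\<lambda>c. sc c z))))) K"

lemma is_add_scz: "is_add (\<lambda>c. sc c z)"
  by (simp add: is_add_def sc_addl)

lemma is_add_T5: "is_add (\<lambda>K. T5 K z)"
  unfolding T5_def
  by (intro is_add_map_poly is_add_scz)

lemma T5_add: "T5 (K + L) z = T5 K z + T5 L z"
  using is_addD(1)[OF is_add_T5] .

lemma T5_diff: "T5 (K - L) z = T5 K z - T5 L z"
  using is_add_diff[OF is_add_T5] .

lemma T5_sum: "T5 (\<Sum>x\<in>A. f x) z = (\<Sum>x\<in>A. T5 (f x) z)"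
  using is_add_sum[OF is_add_T5] .

lemma T5_zadd: "T5 K (z + z') = T5 K z + T5 K z'"
  unfolding T5_def by (simp add: sc_addr map_poly_fun_add_ext)

lemma T5_zneg: "T5 K (- z) = - T5 K z"
proof -
  have "T5 K z + T5 K (- z) = 0"
    unfolding T5_zadd[symmetric] by (simp add: T5_def map_poly_zero_ext)
  then show ?thesis by (simp add: eq_neg_iff_add_eq_0 add.commute)
qed

lemma T5_zdiff: "T5 K (z - z') = T5 K z - T5 K z'"
  using T5_zadd[of K z "-z'"] by (simp add: T5_zneg)

lemma T5_sc: "T5 K (sc d z) = T5 ([:[:[:[:[:d:]:]:]:]:] * K) z"
proof -
  have e: "(\<lambda>c. sc c (sc d z)) = (\<lambda>x. sc d (sc x z))" by (rule ext) (rule sc_comm)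
  show ?thesis
  unfolding T5_def const_mult_poly
  by (simp add: map_poly_map_poly o_def const_mult_poly sc_mult e)
qed

end


definition X1 :: "'r::comm_semiring_1 poly poly poly poly poly" where "X1 = monom 1 1"
definition X2 :: "'r::comm_semiring_1 poly poly poly poly poly" where "X2 = [:monom 1 1:]"
definition X3 :: "'r::comm_semiring_1 poly poly poly poly poly" where "X3 = [:[:monom 1 1:]:]"
definition Xt :: "'r::comm_semiring_1 poly poly poly poly poly" where "Xt = [:[:[:[:monom 1 1:]:]:]:]"

definition E3 :: "'r::comm_semiring_1 poly poly poly \<Rightarrow> 'r poly poly poly poly poly" where
  "E3 F = map_poly (map_poly (map_poly (\<lambda>c. [:[:c:]:]))) F"

definition E21 :: "'r::comm_semiring_1 poly poly \<Rightarrow> 'r poly poly poly" where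
  "E21 F = map_poly (map_poly (\<lambda>c. [:c:])) F"

lemma is_hom_E3: "is_hom E3"
proof -
  have h: "is_hom (\<lambda>c::'a. [:[:c:]:])" by (rule is_hom_comp[OF is_hom_const is_hom_const])
  have e: "E3 = map_poly (map_poly (map_poly (\<lambda>c::'a. [:[:c:]:])))" by (rule ext) (simp add: E3_def)
  show ?thesis unfolding e by (intro is_hom_map_poly h)
qed

lemma is_hom_E21: "is_hom E21"
proof -
  have e: "E21 = map_poly (map_poly (\<lambda>c::'a. [:c:]))" by (rule ext) (simp add: E21_def)
  show ?thesis unfolding e by (intro is_hom_map_poly is_hom_const)
qed

lemma E3_X: "E3 (monom 1 1) = X1" "E3 [:monom 1 1:] = X2" "E3 [:[:monom 1 1:]:] = X3"
  by (simp_all add: E3_def X1_def X2_def X3_def map_poly_monom map_poly_pCons one_pCons[symmetric])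

lemma E21_X: "E21 (monom 1 1) = monom 1 1" "E21 [:monom 1 1:] = [:monom 1 1:]"
  by (simp_all add: E21_def map_poly_monom map_poly_pCons)

lemma pcompose_monom1: "pcompose (monom 1 r) q = q ^ r"
proof (induct r)
  case 0 then show ?case by (simp add: monom_0 one_pCons[symmetric] pcompose_1)
next
  case (Suc r)
  have "monom (1::'a) (Suc r) = [:0, 1:] * monom 1 r"
    by (simp add: monom_Suc)
  then show ?case using Suc by (simp add: pcompose_mult pcompose_pCons)
qed

lemma Delta2_monom1: "Delta2 (monom 1 r) = (monom 1 1 + [:monom 1 1:]) ^ r"
  by (simp add: Delta2_def map_poly_monom pcompose_monom1 one_pCons[symmetric] monom_Suc monom_0)

lemma mon2_conv: "mon2 a b = monom 1 1 ^ a * [:monom 1 1:] ^ b"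
proof -
  have "[:monom (1::'a) b:] = [:monom 1 1:] ^ b"
    using hom_power[OF is_hom_const, of "monom (1::'a) 1" b] by (simp add: monom_power)
  then show ?thesis unfolding mon2_def by (subst monom_as_mult) (simp add: mult.commute)
qed

lemma tensHH_H_conv: "tensHH_H F g = E21 F * [:[:g:]:]"
proof -
  have i: "map_poly (\<lambda>c. [:c:]) x * [:g:] = map_poly (\<lambda>c. smult c g) x" for x :: "'a poly"
    by (subst map_poly_mult_const) simp_all
  have "E21 F * [:[:g:]:] = map_poly (\<lambda>x. map_poly (\<lambda>c. [:c:]) x * [:g:]) F"
    unfolding E21_def by (rule map_poly_mult_const) simp
  also have "\<dots> = map_poly (map_poly (\<lambda>c. smult c g)) F" by (simp only: i)
  finally show ?thesis by (simp add: tensHH_H_def)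
qed

lemma E3_tensHH_H:
  "E3 (tensHH_H (mon2 a b * Delta2 (monom 1 r)) (monom 1 e)) = X1 ^ a * X2 ^ b * (X1 + X2) ^ r * X3 ^ e"
proof -
  have w3: "[:[:monom (1::'a) e:]:] = [:[:monom 1 1:]:] ^ e"
    using hom_power[OF is_hom_comp[OF is_hom_const is_hom_const], of "monom (1::'a) 1" e]
    by (simp add: monom_power)
  show ?thesis
    unfolding tensHH_H_conv mon2_conv Delta2_monom1 w3
    by (simp only: is_homD[OF is_hom_E21] is_homD[OF is_hom_E3] hom_power[OF is_hom_E21]
        hom_power[OF is_hom_E3] E21_X E3_X)
qed


lemma map3_mult_const:
  fixes f :: "'a::zero \<Rightarrow> 'b::comm_semiring_0"
  assumes "f 0 = 0"
  shows "map_poly (map_poly (map_poly f)) F * [:[:[:M:]:]:] = map_poly (map_poly (map_poly (\<lambda>c. f c * M))) F"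
proof -
  have a: "map_poly f y * [:M:] = map_poly (\<lambda>c. f c * M) y" for y
    by (rule map_poly_mult_const) (simp add: assms)
  have b: "map_poly (map_poly f) x * [:[:M:]:] = map_poly (map_poly (\<lambda>c. f c * M)) x" for x
  proof -
    have "map_poly (map_poly f) x * [:[:M:]:] = map_poly (\<lambda>y. map_poly f y * [:M:]) x"
      by (rule map_poly_mult_const) (simp add: assms)
    then show ?thesis by (simp only: a)
  qed
  have "map_poly (map_poly (map_poly f)) F * [:[:[:M:]:]:] = map_poly (\<lambda>x. map_poly (map_poly f) x * [:[:M:]:]) F"
    by (rule map_poly_mult_const) (simp add: assms)
  then show ?thesis by (simp only: b)
qed

lemma Xt_power: "Xt ^ e = [:[:[:[:monom (1::'a::comm_semiring_1) e:]:]:]:]"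
proof -
  have h: "is_hom (\<lambda>x::'a poly. [:[:[:[:x:]:]:]:])"
    by (rule is_hom_comp[OF is_hom_const is_hom_comp[OF is_hom_const is_hom_comp[OF is_hom_const is_hom_const]]])
  show ?thesis unfolding Xt_def using hom_power[OF h, of "monom 1 1" e] by (simp add: monom_power)
qed

context NA
begin

lemma T5_map3:
  assumes "h 0 = 0"
  shows "T5 (map_poly (map_poly (map_poly h)) F) z =
         map_poly (map_poly (map_poly (\<lambda>c. map_poly (map_poly (\<lambda>d. sc d z)) (h c)))) F"
  unfolding T5_def by (simp add: map_poly_map_poly assms o_def)

lemma tensor3_conv: "tensor3 (scaleP sc) F (monom (monom z e) 0) = T5 (E3 F * Xt ^ e) z"
proof -
  have "E3 F * Xt ^ e = map_poly (map_poly (map_poly (\<lambda>c. [:[:c:]:] * [:monom 1 e:]))) F"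
    unfolding Xt_power E3_def by (rule map3_mult_const) simp
  also have "\<dots> = map_poly (map_poly (map_poly (\<lambda>c. [:monom c e:]))) F"
    by (simp add: smult_monom)
  finally have "T5 (E3 F * Xt ^ e) z = map_poly (map_poly (map_poly (\<lambda>c. [:monom (sc c z) e:]))) F"
    by (simp add: T5_map3 map_poly_monom map_poly_pCons)
  then show ?thesis
    by (simp add: tensor3_def scaleP_def scaleAt_def map_poly_monom monom_0 map_poly_pCons)
qed

lemma of_nat_K5: "(of_nat n :: 'k poly poly poly poly poly) = [:[:[:[:[:of_nat n:]:]:]:]:]"
  by (simp add: of_nat_poly)

lemma T5_of_nat: "T5 K (sc (of_nat n) z) = T5 (of_nat n * K) z"
  by (simp add: T5_sc of_nat_K5)

lemma scaleP_0l [simp]: "scaleP sc 0 m = 0"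
  unfolding scaleP_def by (rule poly_eqI) (simp add: coeff_map_poly)

lemma scaleP_0r [simp]: "scaleP sc c 0 = 0"
  unfolding scaleP_def by simp

lemma is_add_scaleP: "is_add (scaleP sc c)"
  unfolding is_add_def scaleP_def by (simp add: map_poly_add_hom scaleAt_add)

lemma sadd_tensor3: "sadd (\<lambda>a b z. tensor3 (scaleP sc) (G a b) z)"
proof -
  have "tensor3 (scaleP sc) F (z + z') = tensor3 (scaleP sc) F z + tensor3 (scaleP sc) F z'" for F z z'
    unfolding tensor3_def is_addD(1)[OF is_add_scaleP]
    by (simp add: map_poly_fun_add_ext is_addD(2)[OF is_add_scaleP])
  moreover have "tensor3 (scaleP sc) F 0 = 0" for F
    unfolding tensor3_def is_addD(2)[OF is_add_scaleP]
    by (simp add: map_poly_zero_ext)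
  ultimately show ?thesis by (simp add: sadd_def is_add_def)
qed

end

lemma sum2_fun_add: "sum2 X (\<lambda>i j z. f i j z + g i j z) = sum2 X f + sum2 X g"
  by (simp add: sum2_def sum.distrib)

lemma binom2:
  fixes P x y t :: "'r::comm_semiring_1"
  shows "(\<Sum>s\<le>g. \<Sum>r\<le>l. of_nat ((g choose s) * (l choose r)) * (P * y ^ r * x ^ (k + s) * t ^ (g - s + (l - r))))
         = P * x ^ k * (x + t) ^ g * (y + t) ^ l"
proof -
  have "P * x ^ k * (x + t) ^ g * (y + t) ^ l =
        (P * x ^ k) * ((\<Sum>s\<le>g. of_nat (g choose s) * x ^ s * t ^ (g - s)) * (\<Sum>r\<le>l. of_nat (l choose r) * y ^ r * t ^ (l - r)))"
    by (simp add: binomial_ring mult.assoc)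
  also have "\<dots> = (\<Sum>s\<le>g. \<Sum>r\<le>l. (P * x ^ k) * ((of_nat (g choose s) * x ^ s * t ^ (g - s)) * (of_nat (l choose r) * y ^ r * t ^ (l - r))))"
    unfolding sum_product by (simp only: sum_distrib_left)
  also have "\<dots> = (\<Sum>s\<le>g. \<Sum>r\<le>l. of_nat ((g choose s) * (l choose r)) * (P * y ^ r * x ^ (k + s) * t ^ (g - s + (l - r))))"
    by (intro sum.cong refl) (simp only: power_add of_nat_mult mult_ac)
  finally show ?thesis by simp
qed

context NA
begin

definition lh :: "nat \<Rightarrow> nat \<Rightarrow> nat \<Rightarrow> nat \<Rightarrow> 'a poly poly \<Rightarrow> 'a poly poly poly poly poly" where
  "lh i j a b z = tensor3 (scaleP sc) (tensHH_H (mon2 i j * Delta2 (monom 1 a)) (monom 1 b)) z"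

definition rh :: "nat \<Rightarrow> nat \<Rightarrow> nat \<Rightarrow> nat \<Rightarrow> 'a poly poly \<Rightarrow> 'a poly poly poly poly poly" where
  "rh a b c d z = tensor3 (scaleP sc) (tensH_HH (monom 1 c) (mon2 a b * Delta2 (monom 1 d))) z"

lemma sadd_lh: "sadd (lh i j)"
  unfolding lh_def by (rule sadd_tensor3)

lemma sadd_rh: "sadd (rh a b)"
  unfolding rh_def by (rule sadd_tensor3)

lemma lprod_alt: "lprod (scaleP sc) (pprodP sc mul) X w = sum2 X (\<lambda>i j m. sum2 (pprodP sc mul m w) (lh i j))"
  unfolding lprod_def lh_def by simp

lemma rprod_alt: "rprod (scaleP sc) (pprodP sc mul) u Y = sum2 Y (\<lambda>a b y. sum2 (pprodP sc mul u y) (rh a b))"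
  unfolding rprod_def rh_def by simp

lemma sadd_lf: "sadd (\<lambda>i j m. sum2 (pprodP sc mul m w) (lh i j))"
  unfolding sadd_def is_add_def by (simp add: pp_add1 sum2_add[OF sadd_lh] sum2_0[OF sadd_lh])

lemma sadd_rf: "sadd (\<lambda>a b y. sum2 (pprodP sc mul u y) (rh a b))"
  unfolding sadd_def is_add_def by (simp add: pp_add2 sum2_add[OF sadd_rh] sum2_0[OF sadd_rh])

lemma lprod_add1: "lprod (scaleP sc) (pprodP sc mul) (X + Y) w =
   lprod (scaleP sc) (pprodP sc mul) X w + lprod (scaleP sc) (pprodP sc mul) Y w"
  unfolding lprod_alt by (rule sum2_add[OF sadd_lf])

lemma lprod_sum1: "lprod (scaleP sc) (pprodP sc mul) (\<Sum>x\<in>A. f x) w = (\<Sum>x\<in>A. lprod (scaleP sc) (pprodP sc mul) (f x) w)"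
  unfolding lprod_alt by (rule sum2_sum[OF sadd_lf])

lemma lprod_add2: "lprod (scaleP sc) (pprodP sc mul) X (w + w') =
   lprod (scaleP sc) (pprodP sc mul) X w + lprod (scaleP sc) (pprodP sc mul) X w'"
  unfolding lprod_alt by (simp add: pp_add2 sum2_add[OF sadd_lh] sum2_fun_add)

lemma rprod_add2: "rprod (scaleP sc) (pprodP sc mul) u (Y + Y') =
   rprod (scaleP sc) (pprodP sc mul) u Y + rprod (scaleP sc) (pprodP sc mul) u Y'"
  unfolding rprod_alt by (rule sum2_add[OF sadd_rf])

lemma rprod_sum2: "rprod (scaleP sc) (pprodP sc mul) u (\<Sum>x\<in>A. f x) = (\<Sum>x\<in>A. rprod (scaleP sc) (pprodP sc mul) u (f x))"
  unfolding rprod_alt by (rule sum2_sum[OF sadd_rf])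

lemma rprod_add1: "rprod (scaleP sc) (pprodP sc mul) (u + u') Y =
   rprod (scaleP sc) (pprodP sc mul) u Y + rprod (scaleP sc) (pprodP sc mul) u' Y"
  unfolding rprod_alt by (simp add: pp_add1 sum2_add[OF sadd_rh] sum2_fun_add)

lemma lprod_M4:
  "lprod (scaleP sc) (pprodP sc mul) (monom (monom (monom (monom y g) 0) be) al) (monom (monom c l) k)
   = T5 (X1 ^ al * X2 ^ be * X3 ^ k * (X3 + Xt) ^ g * (X1 + X2 + Xt) ^ l) (mul y c)"
proof -
  have "lprod (scaleP sc) (pprodP sc mul) (monom (monom (monom (monom y g) 0) be) al) (monom (monom c l) k)
      = sum2 (pprodP sc mul (monom (monom y g) 0) (monom (monom c l) k)) (lh al be)"
    unfolding lprod_alt by (simp add: sum2_monom[OF sadd_lf])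
  also have "\<dots> = (\<Sum>s\<le>g. \<Sum>r\<le>l. lh al be r (k + s)
                    (monom (monom (sc (of_nat ((g choose s) * (l choose r))) (mul y c)) (g - s + (l - r))) 0))"
    by (simp add: pp_monom sum2_sum[OF sadd_lh] sum2_monom[OF sadd_lh] del: of_nat_mult)
  also have "\<dots> = (\<Sum>s\<le>g. \<Sum>r\<le>l. T5 (of_nat ((g choose s) * (l choose r)) *
                   (X1 ^ al * X2 ^ be * (X1 + X2) ^ r * X3 ^ (k + s) * Xt ^ (g - s + (l - r)))) (mul y c))"
    by (simp add: lh_def tensor3_conv E3_tensHH_H T5_of_nat del: of_nat_mult)
  also have "\<dots> = T5 (\<Sum>s\<le>g. \<Sum>r\<le>l. of_nat ((g choose s) * (l choose r)) *
                   (X1 ^ al * X2 ^ be * (X1 + X2) ^ r * X3 ^ (k + s) * Xt ^ (g - s + (l - r)))) (mul y c)"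
    by (simp add: T5_sum del: of_nat_mult)
  also have "(\<Sum>s\<le>g. \<Sum>r\<le>l. of_nat ((g choose s) * (l choose r)) *
                   (X1 ^ al * X2 ^ be * (X1 + X2) ^ r * X3 ^ (k + s) * Xt ^ (g - s + (l - r))))
             = X1 ^ al * X2 ^ be * X3 ^ k * (X3 + Xt) ^ g * (X1 + X2 + Xt) ^ l"
    by (rule binom2)
  finally show ?thesis .
qed

end

lemma binomG:
  fixes A x y u :: "'r::comm_semiring_1"
  shows "(\<Sum>s\<le>n. \<Sum>r\<le>m. of_nat ((n choose s) * (m choose r)) * (A * x ^ (i + r) * y ^ (j + s) * u ^ (n - s + (m - r))))
         = A * x ^ i * y ^ j * (y + u) ^ n * (x + u) ^ m"
proof -
  have "A * x ^ i * y ^ j * (y + u) ^ n * (x + u) ^ m =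
        (A * x ^ i * y ^ j) * ((\<Sum>s\<le>n. of_nat (n choose s) * y ^ s * u ^ (n - s)) * (\<Sum>r\<le>m. of_nat (m choose r) * x ^ r * u ^ (m - r)))"
    by (simp add: binomial_ring mult.assoc)
  also have "\<dots> = (\<Sum>s\<le>n. \<Sum>r\<le>m. (A * x ^ i * y ^ j) * ((of_nat (n choose s) * y ^ s * u ^ (n - s)) * (of_nat (m choose r) * x ^ r * u ^ (m - r))))"
    unfolding sum_product by (simp only: sum_distrib_left)
  also have "\<dots> = (\<Sum>s\<le>n. \<Sum>r\<le>m. of_nat ((n choose s) * (m choose r)) * (A * x ^ (i + r) * y ^ (j + s) * u ^ (n - s + (m - r))))"
    by (intro sum.cong refl) (simp only: power_add of_nat_mult mult_ac)
  finally show ?thesis by simp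
qed

lemma tensH_HH_monom1: "tensH_HH (monom 1 c) G = monom G c"
proof -
  have "map_poly (smult 0) G = 0" by (rule poly_eqI) (simp add: coeff_map_poly)
  moreover have "map_poly (smult 1) G = G" by (rule poly_eqI) (simp add: coeff_map_poly)
  ultimately show ?thesis by (simp add: tensH_HH_def map_poly_monom)
qed

lemma E3_tensH_HH:
  fixes c a b d :: nat
  shows "(E3::'r::field poly poly poly \<Rightarrow> _) (tensH_HH (monom 1 c) (mon2 a b * Delta2 (monom 1 d))) = X1 ^ c * X2 ^ a * X3 ^ b * (X2 + X3) ^ d"
proof -
  let ?G = "mon2 a b * Delta2 (monom (1::'r) d)"
  have h1: "tensH_HH (monom 1 c) ?G = [:?G:] * monom 1 1 ^ c"
    by (simp only: tensH_HH_monom1 monom_as_mult[of ?G c])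
  have h2: "E3 ([:?G:] * monom 1 1 ^ c) = X1 ^ c * X2 ^ a * X3 ^ b * (X2 + X3) ^ d"
    unfolding mon2_conv Delta2_monom1
    by (simp only: is_homD[OF is_hom_const] hom_power[OF is_hom_const]
          is_homD[OF is_hom_E3] hom_power[OF is_hom_E3] E3_X mult_ac)
  show ?thesis by (subst h1) (rule h2)
qed

context NA
begin

lemma rprod_M4:
  "rprod (scaleP sc) (pprodP sc mul) (monom (monom a n) i) (monom (monom (monom (monom y g) 0) be) al)
   = T5 (X1 ^ i * X2 ^ al * X3 ^ be * (X2 + X3 + Xt) ^ n * (X1 + Xt) ^ g) (mul a y)"
proof -
  have "rprod (scaleP sc) (pprodP sc mul) (monom (monom a n) i) (monom (monom (monom (monom y g) 0) be) al)
      = sum2 (pprodP sc mul (monom (monom a n) i) (monom (monom y g) 0)) (rh al be)"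
    unfolding rprod_alt by (simp add: sum2_monom[OF sadd_rf])
  also have "\<dots> = (\<Sum>s\<le>n. \<Sum>r\<le>g. rh al be (i + r) s
                    (monom (monom (sc (of_nat ((n choose s) * (g choose r))) (mul a y)) (n - s + (g - r))) 0))"
    by (simp add: pp_monom sum2_sum[OF sadd_rh] sum2_monom[OF sadd_rh] del: of_nat_mult)
  also have "\<dots> = (\<Sum>s\<le>n. \<Sum>r\<le>g. T5 (of_nat ((n choose s) * (g choose r)) *
                   ((X2 ^ al * X3 ^ be) * X1 ^ (i + r) * (X2 + X3) ^ s * Xt ^ (n - s + (g - r)))) (mul a y))"
    by (intro sum.cong refl) (simp add: rh_def tensor3_conv E3_tensH_HH T5_of_nat mult_ac del: of_nat_mult)
  also have "\<dots> = T5 (\<Sum>s\<le>n. \<Sum>r\<le>g. of_nat ((n choose s) * (g choose r)) *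
                   ((X2 ^ al * X3 ^ be) * X1 ^ (i + r) * (X2 + X3) ^ s * Xt ^ (n - s + (g - r)))) (mul a y)"
    by (simp only: T5_sum)
  also have "(\<Sum>s\<le>n. \<Sum>r\<le>g. of_nat ((n choose s) * (g choose r)) *
                   ((X2 ^ al * X3 ^ be) * X1 ^ (i + r) * (X2 + X3) ^ s * Xt ^ (n - s + (g - r))))
      = (X2 ^ al * X3 ^ be) * X1 ^ i * (X2 + X3 + Xt) ^ n * (X1 + Xt) ^ g"
    using binomG[of n g "X2 ^ al * X3 ^ be" X1 i "X2 + X3" 0 Xt] by simp
  finally show ?thesis by (simp add: mult_ac)
qed

end

definition Phi :: "nat \<Rightarrow> nat \<Rightarrow> nat \<Rightarrow> nat \<Rightarrow> nat \<Rightarrow> nat \<Rightarrow> 'r::comm_semiring_1 poly poly poly poly poly" where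
  "Phi i j k n m l = X1 ^ i * X2 ^ j * X3 ^ k * (X2 + X3 + Xt) ^ n * (X1 + X3 + Xt) ^ m * (X1 + X2 + Xt) ^ l"

context NA
begin

lemma lprod_pp_mon:
  "lprod (scaleP sc) (pprodP sc mul) (pprodP sc mul (monom (monom a n) i) (monom (monom b m) j)) (monom (monom c l) k)
   = T5 (Phi i j k n m l) (mul (mul a b) c)"
proof -
  let ?A = "X3 ^ k * (X1 + X2 + Xt) ^ l :: 'k poly poly poly poly poly"
  have "lprod (scaleP sc) (pprodP sc mul) (pprodP sc mul (monom (monom a n) i) (monom (monom b m) j)) (monom (monom c l) k)
      = (\<Sum>s\<le>n. \<Sum>r\<le>m. T5 (X1 ^ (i + r) * X2 ^ (j + s) * X3 ^ k * (X3 + Xt) ^ (n - s + (m - r)) * (X1 + X2 + Xt) ^ l)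
              (mul (sc (of_nat ((n choose s) * (m choose r))) (mul a b)) c))"
    by (simp add: pp_monom lprod_sum1 lprod_M4 del: of_nat_mult)
  also have "\<dots> = (\<Sum>s\<le>n. \<Sum>r\<le>m. T5 (of_nat ((n choose s) * (m choose r)) *
                     (?A * X1 ^ (i + r) * X2 ^ (j + s) * (X3 + Xt) ^ (n - s + (m - r)))) (mul (mul a b) c))"
    by (intro sum.cong refl) (simp add: mul_scl T5_of_nat mult_ac del: of_nat_mult)
  also have "\<dots> = T5 (\<Sum>s\<le>n. \<Sum>r\<le>m. of_nat ((n choose s) * (m choose r)) *
                     (?A * X1 ^ (i + r) * X2 ^ (j + s) * (X3 + Xt) ^ (n - s + (m - r)))) (mul (mul a b) c)"
    by (simp only: T5_sum)
  also have "(\<Sum>s\<le>n. \<Sum>r\<le>m. of_nat ((n choose s) * (m choose r)) *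
                     (?A * X1 ^ (i + r) * X2 ^ (j + s) * (X3 + Xt) ^ (n - s + (m - r))))
             = ?A * X1 ^ i * X2 ^ j * (X2 + (X3 + Xt)) ^ n * (X1 + (X3 + Xt)) ^ m"
    by (rule binomG)
  also have "\<dots> = Phi i j k n m l" by (simp add: Phi_def add_ac mult_ac)
  finally show ?thesis .
qed

lemma rprod_pp_mon:
  "rprod (scaleP sc) (pprodP sc mul) (monom (monom a n) i) (pprodP sc mul (monom (monom b m) j) (monom (monom c l) k))
   = T5 (Phi i j k n m l) (mul a (mul b c))"
proof -
  let ?A = "X1 ^ i * (X2 + X3 + Xt) ^ n :: 'k poly poly poly poly poly"
  have "rprod (scaleP sc) (pprodP sc mul) (monom (monom a n) i) (pprodP sc mul (monom (monom b m) j) (monom (monom c l) k))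
      = (\<Sum>s\<le>m. \<Sum>r\<le>l. T5 (X1 ^ i * X2 ^ (j + r) * X3 ^ (k + s) * (X2 + X3 + Xt) ^ n * (X1 + Xt) ^ (m - s + (l - r)))
              (mul a (sc (of_nat ((m choose s) * (l choose r))) (mul b c))))"
    by (simp add: pp_monom rprod_sum2 rprod_M4 del: of_nat_mult)
  also have "\<dots> = (\<Sum>s\<le>m. \<Sum>r\<le>l. T5 (of_nat ((m choose s) * (l choose r)) *
                     (?A * X2 ^ (j + r) * X3 ^ (k + s) * (X1 + Xt) ^ (m - s + (l - r)))) (mul a (mul b c)))"
    by (intro sum.cong refl) (simp add: mul_scr T5_of_nat mult_ac del: of_nat_mult)
  also have "\<dots> = T5 (\<Sum>s\<le>m. \<Sum>r\<le>l. of_nat ((m choose s) * (l choose r)) *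
                     (?A * X2 ^ (j + r) * X3 ^ (k + s) * (X1 + Xt) ^ (m - s + (l - r)))) (mul a (mul b c))"
    by (simp only: T5_sum)
  also have "(\<Sum>s\<le>m. \<Sum>r\<le>l. of_nat ((m choose s) * (l choose r)) *
                     (?A * X2 ^ (j + r) * X3 ^ (k + s) * (X1 + Xt) ^ (m - s + (l - r))))
             = ?A * X2 ^ j * X3 ^ k * (X3 + (X1 + Xt)) ^ m * (X2 + (X1 + Xt)) ^ l"
    by (rule binomG)
  also have "\<dots> = Phi i j k n m l" by (simp add: Phi_def add_ac mult_ac)
  finally show ?thesis .
qed

definition LL :: "'a poly poly \<Rightarrow> 'a poly poly \<Rightarrow> 'a poly poly \<Rightarrow> 'a poly poly poly poly poly" where
  "LL u v w = rprod (scaleP sc) (pprodP sc mul) u (pprodP sc mul v w)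
            - lprod (scaleP sc) (pprodP sc mul) (pprodP sc mul u v) w"

lemma LL_add1: "LL (u + u') v w = LL u v w + LL u' v w"
  by (simp add: LL_def rprod_add1 pp_add1 lprod_add1)
lemma LL_add2: "LL u (v + v') w = LL u v w + LL u v' w"
  by (simp add: LL_def rprod_add2 pp_add1 pp_add2 lprod_add1)
lemma LL_add3: "LL u v (w + w') = LL u v w + LL u v w'"
  by (simp add: LL_def rprod_add2 pp_add2 lprod_add2)

lemma LL_mon: "LL (monom (monom a n) i) (monom (monom b m) j) (monom (monom c l) k)
   = - T5 (Phi i j k n m l) (assocA mul a b c)"
  by (simp add: LL_def lprod_pp_mon rprod_pp_mon assocA_def T5_zdiff[symmetric] T5_zneg[symmetric])

end

lemma tri_induct:
  assumes mon: "\<And>a n i b m j c l k. P (monom (monom a n) i) (monom (monom b m) j) (monom (monom c l) k)"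
    and a1: "\<And>u u' v w. P u v w \<Longrightarrow> P u' v w \<Longrightarrow> P (u + u') v w"
    and a2: "\<And>u v v' w. P u v w \<Longrightarrow> P u v' w \<Longrightarrow> P u (v + v') w"
    and a3: "\<And>u v w w'. P u v w \<Longrightarrow> P u v w' \<Longrightarrow> P u v (w + w')"
  shows "P u v w"
proof -
  have "\<forall>v w. P u v w"
  proof (induct u rule: poly2_induct_monom)
    case (1 a n i)
    show ?case
    proof (intro allI)
      fix v w
      show "P (monom (monom a n) i) v w"
      proof (induct v arbitrary: w rule: poly2_induct_monom)
        case (1 b m j)
        show ?case by (induct w rule: poly2_induct_monom) (auto intro: mon a3)
      next
        case (2 p q) then show ?case by (auto intro: a2)
      qed
    qed
  next
    case (2 p q) then show ?case by (auto intro: a1)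
  qed
  then show ?thesis by blast
qed


definition ev12 :: "'r::comm_semiring_1 poly poly \<Rightarrow> 'r poly poly" where
  "ev12 X = poly (map_poly (\<lambda>Q. poly (map_poly (\<lambda>c. [:[:c:]:]) Q) (monom 1 1)) X) [:monom 1 1:]"

lemma is_hom_ev12: "is_hom ev12"
proof -
  have c2: "is_hom (\<lambda>c::'a. [:[:c:]:])" by (rule is_hom_comp[OF is_hom_const is_hom_const])
  have f: "is_hom (\<lambda>Q::'a poly. poly (map_poly (\<lambda>c. [:[:c:]:]) Q) (monom 1 1))"
    by (rule is_hom_comp[OF is_hom_poly is_hom_map_poly[OF c2]])
  have "is_hom (\<lambda>X::'a poly poly. poly (map_poly (\<lambda>Q. poly (map_poly (\<lambda>c. [:[:c:]:]) Q) (monom 1 1)) X) [:monom 1 1:])"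
    by (rule is_hom_comp[OF is_hom_poly is_hom_map_poly[OF f]])
  moreover have "ev12 = (\<lambda>X::'a poly poly. poly (map_poly (\<lambda>Q. poly (map_poly (\<lambda>c. [:[:c:]:]) Q) (monom 1 1)) X) [:monom 1 1:])"
    by (rule ext) (simp add: ev12_def)
  ultimately show ?thesis by simp
qed

lemma sadd_swap: "sadd (\<lambda>i j z. monom (monom z i) j)"
  by (simp add: sadd_def is_add_def add_monom)

lemma swap12_add: "swap12 (X + Y) = swap12 X + swap12 Y"
  unfolding swap12_def by (rule sum2_add[OF sadd_swap])

lemma swap12_0 [simp]: "swap12 0 = 0"
  unfolding swap12_def by (rule sum2_0[OF sadd_swap])

lemma is_add_swap12: "is_add swap12"
  by (simp add: is_add_def swap12_add)

lemma swap12_monom: "swap12 (monom (monom z j) i) = monom (monom z i) j"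
  unfolding swap12_def by (simp add: sum2_monom[OF sadd_swap])

lemma swap12_ev12: "swap12 (X :: 'r::comm_semiring_1 poly poly) = ev12 X"
proof (induct X rule: poly2_induct_monom)
  case (1 q j i)
  have "ev12 (monom (monom q j) i) = [:[:q:]:] * monom 1 1 ^ j * [:monom 1 1:] ^ i"
    by (simp add: ev12_def map_poly_monom poly_monom)
  also have "\<dots> = monom (monom q i) j"
  proof -
    have "[:monom q i:] = [:[:q:] * monom 1 1 ^ i:]" by (simp only: monom_as_mult[of q i])
    also have "\<dots> = [:[:q:]:] * [:monom 1 1:] ^ i"
      by (simp only: is_homD(2)[OF is_hom_const] hom_power[OF is_hom_const])
    finally have "[:monom q i:] = [:[:q:]:] * [:monom 1 1:] ^ i" .
    then show ?thesis by (simp add: monom_as_mult[of "monom q i" j] mult_ac)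
  qed
  finally show ?case by (simp add: swap12_monom)
next
  case (2 p q) then show ?case by (simp add: swap12_add is_homD[OF is_hom_ev12])
qed

lemma is_hom_swap12: "is_hom (swap12 :: 'r::comm_semiring_1 poly poly \<Rightarrow> _)"
proof -
  have "swap12 = (ev12 :: 'r poly poly \<Rightarrow> _)" by (rule ext) (rule swap12_ev12)
  then show ?thesis using is_hom_ev12 by simp
qed

lemma swap12_map2:
  assumes "is_add h"
  shows "swap12 (map_poly (map_poly h) X) = map_poly (map_poly h) (swap12 X)"
proof (induct X rule: poly2_induct_monom)
  case (1 q j i)
  then show ?case using is_addD(2)[OF assms]
    by (simp add: map_poly_monom swap12_monom)
next
  case (2 p q)
  have ha: "is_add (map_poly (map_poly h))" by (intro is_add_map_poly assms)
  show ?case using 2 by (simp add: is_addD(1)[OF ha] swap12_add)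
qed

lemma swap12_V:
  "swap12 (monom 1 1 :: 'r::comm_semiring_1 poly poly) = [:monom 1 1:]"
  "swap12 ([:monom 1 1:] :: 'r::comm_semiring_1 poly poly) = monom 1 1"
  "swap12 ([:[:q:]:] :: 'r::comm_semiring_1 poly poly) = [:[:q:]:]"
proof -
  have e1: "(monom 1 1 :: 'r poly poly) = monom (monom 1 0) 1" by (simp add: monom_0 one_pCons[symmetric])
  show "swap12 (monom 1 1 :: 'r::comm_semiring_1 poly poly) = [:monom 1 1:]"
    by (subst e1, subst swap12_monom) (simp add: monom_0)
  have e2: "([:monom 1 1:] :: 'r poly poly) = monom (monom 1 1) 0" by (simp add: monom_0)
  show "swap12 ([:monom 1 1:] :: 'r::comm_semiring_1 poly poly) = monom 1 1"
    by (subst e2, subst swap12_monom) (simp add: monom_0 one_pCons[symmetric])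
  have e3: "([:[:q:]:] :: 'r poly poly) = monom (monom q 0) 0" by (simp add: monom_0)
  show "swap12 ([:[:q:]:] :: 'r::comm_semiring_1 poly poly) = [:[:q:]:]"
    by (subst e3, subst swap12_monom) (simp add: monom_0)
qed

lemma swap12_1: "swap12 (1 :: 'r::comm_semiring_1 poly poly) = 1"
  by (rule is_homD(4)[OF is_hom_swap12])

lemma swap12_X:
  "swap12 (X1 :: 'r::comm_semiring_1 poly poly poly poly poly) = X2"
  "swap12 (X2 :: 'r::comm_semiring_1 poly poly poly poly poly) = X1"
  "swap12 (X3 :: 'r::comm_semiring_1 poly poly poly poly poly) = X3"
  "swap12 (Xt :: 'r::comm_semiring_1 poly poly poly poly poly) = Xt"
  by (simp_all only: X1_def X2_def X3_def Xt_def swap12_V)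

lemma map_swap12_X:
  "map_poly swap12 (X1 :: 'r::comm_semiring_1 poly poly poly poly poly) = X1"
  "map_poly swap12 (X2 :: 'r::comm_semiring_1 poly poly poly poly poly) = X3"
  "map_poly swap12 (X3 :: 'r::comm_semiring_1 poly poly poly poly poly) = X2"
  "map_poly swap12 (Xt :: 'r::comm_semiring_1 poly poly poly poly poly) = Xt"
  by (simp_all only: X1_def X2_def X3_def Xt_def map_poly_monom map_poly_pCons swap12_V swap12_1 swap12_0 map_poly_0)

lemma swap12_Phi: "swap12 (Phi j i k m n l :: 'r::comm_semiring_1 poly poly poly poly poly) = Phi i j k n m l"
  by (simp add: Phi_def is_homD[OF is_hom_swap12] hom_power[OF is_hom_swap12] swap12_X add_ac mult_ac)

lemma map_swap12_Phi: "map_poly swap12 (Phi i k j n l m :: 'r::comm_semiring_1 poly poly poly poly poly) = Phi i j k n m l"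
proof -
  have h: "is_hom (map_poly (swap12 :: 'r poly poly poly poly \<Rightarrow> _))"
    by (intro is_hom_map_poly is_hom_swap12)
  show ?thesis
    by (simp add: Phi_def is_homD[OF h] hom_power[OF h] map_swap12_X add_ac mult_ac)
qed

context NA
begin

lemma sigma12_T5: "sigma12 (T5 K z) = T5 (swap12 K) z"
proof -
  have h: "is_add (map_poly (map_poly (map_poly (\<lambda>c. sc c z))))"
    by (intro is_add_map_poly is_add_scz)
  show ?thesis unfolding sigma12_def T5_def by (rule swap12_map2[OF h])
qed

lemma sigma23_T5: "sigma23 (T5 K z) = T5 (map_poly swap12 K) z"
proof -
  have h: "is_add (map_poly (map_poly (\<lambda>c. sc c z)))"
    by (intro is_add_map_poly is_add_scz)
  have e: "(\<lambda>x. swap12 (map_poly (map_poly (map_poly (map_poly (\<lambda>c. sc c z)))) x))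
         = (\<lambda>x. map_poly (map_poly (map_poly (map_poly (\<lambda>c. sc c z)))) (swap12 x))"
    by (rule ext) (rule swap12_map2[OF h])
  show ?thesis unfolding sigma23_def T5_def
    by (simp add: map_poly_map_poly o_def e)
qed

lemma sigma12_add: "sigma12 (X + Y) = sigma12 X + sigma12 Y"
  by (simp add: sigma12_def swap12_add)
lemma sigma12_diff: "sigma12 (X - Y) = sigma12 X - sigma12 (Y :: 'b::ab_group_add poly poly poly)"
proof -
  have "sigma12 (X - Y) + sigma12 Y = sigma12 X" by (simp add: sigma12_add[symmetric])
  then show ?thesis by (simp add: eq_diff_eq)
qed
lemma sigma12_neg: "sigma12 (- X) = - sigma12 (X :: 'b::ab_group_add poly poly poly)"
  using sigma12_diff[of 0 X] by (simp add: sigma12_def)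
lemma sigma23_add: "sigma23 (X + Y) = sigma23 X + sigma23 Y"
  unfolding sigma23_def by (rule map_poly_add_hom) (simp_all add: swap12_add)
lemma sigma23_diff: "sigma23 (X - Y) = sigma23 X - sigma23 (Y :: 'b::ab_group_add poly poly poly)"
proof -
  have "sigma23 (X - Y) + sigma23 Y = sigma23 X" by (simp add: sigma23_add[symmetric])
  then show ?thesis by (simp add: eq_diff_eq)
qed
lemma sigma23_neg: "sigma23 (- X) = - sigma23 (X :: 'b::ab_group_add poly poly poly)"
  using sigma23_diff[of 0 X] by (simp add: sigma23_def)

end

locale ALT = NA +
  assumes ALT: "alternative_alg mul"
begin

lemma assoc_xxy: "assocA mul x x y = 0"
  using ALT by (simp add: alternative_alg_def assocA_def)
lemma assoc_xyy: "assocA mul x y y = 0"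
  using ALT by (simp add: alternative_alg_def assocA_def)

lemma assoc_add1: "assocA mul (x + x') y z = assocA mul x y z + assocA mul x' y z"
  by (simp add: assocA_def mul_addl mul_addr)
lemma assoc_add2: "assocA mul x (y + y') z = assocA mul x y z + assocA mul x y' z"
  by (simp add: assocA_def mul_addl mul_addr)
lemma assoc_add3: "assocA mul x y (z + z') = assocA mul x y z + assocA mul x y z'"
  by (simp add: assocA_def mul_addl mul_addr)

lemma assoc_anti12: "assocA mul y x z = - assocA mul x y z"
proof -
  have "0 = assocA mul (x + y) (x + y) z" by (simp add: assoc_xxy)
  also have "\<dots> = assocA mul x y z + assocA mul y x z"
    unfolding assoc_add1 assoc_add2 by (simp add: assoc_xxy)
  finally have "0 = assocA mul x y z + assocA mul y x z" .
  then show ?thesis by (metis neg_eq_iff_add_eq_0)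
qed

lemma assoc_anti23: "assocA mul x z y = - assocA mul x y z"
proof -
  have "0 = assocA mul x (y + z) (y + z)" by (simp add: assoc_xyy)
  also have "\<dots> = assocA mul x y z + assocA mul x z y"
    unfolding assoc_add2 assoc_add3 by (simp add: assoc_xyy)
  finally have "0 = assocA mul x y z + assocA mul x z y" .
  then show ?thesis by (metis neg_eq_iff_add_eq_0)
qed

lemma AL1: "LL u v w = sigma12 (- LL v u w)"
proof (induct u v w rule: tri_induct)
  case (1 a n i b m j c l k)
  show ?case
    by (simp add: LL_mon sigma12_neg sigma12_T5 swap12_Phi assoc_anti12[of b a] T5_zneg)
next
  case (2 u u' v w) then show ?case by (simp add: LL_add1 LL_add2 sigma12_add sigma12_neg sigma12_diff)
next
  case (3 u v v' w) then show ?case by (simp add: LL_add1 LL_add2 sigma12_add sigma12_neg sigma12_diff)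
next
  case (4 u v w w') then show ?case by (simp add: LL_add3 sigma12_add sigma12_neg sigma12_diff)
qed

lemma AL2: "LL u v w = sigma23 (- LL u w v)"
proof (induct u v w rule: tri_induct)
  case (1 a n i b m j c l k)
  show ?case
    by (simp add: LL_mon sigma23_neg sigma23_T5 map_swap12_Phi assoc_anti23[of a c b] T5_zneg)
next
  case (2 u u' v w) then show ?case by (simp add: LL_add1 sigma23_add sigma23_neg sigma23_diff)
next
  case (3 u v v' w) then show ?case by (simp add: LL_add2 LL_add3 sigma23_add sigma23_neg sigma23_diff)
next
  case (4 u v w w') then show ?case by (simp add: LL_add2 LL_add3 sigma23_add sigma23_neg sigma23_diff)
qed

end

definition evk :: "'r::comm_semiring_1 poly poly poly \<Rightarrow> 'r" where
  "evk F = poly (poly (poly F 1) 0) 0"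

definition ev3 :: "'p::comm_monoid_add poly poly poly \<Rightarrow> 'p" where
  "ev3 X = LE (\<lambda>_ Q. coeff (coeff Q 0) 0) X"

definition ev1 :: "'b::comm_monoid_add poly \<Rightarrow> 'b" where
  "ev1 m = LE (\<lambda>_ v. v) m"

lemma ladd_ev3: "ladd (\<lambda>(_::nat) Q. coeff (coeff Q 0) (0::nat))"
  by (simp add: ladd_def)

lemma ladd_ev1: "ladd (\<lambda>(_::nat) v. v)"
  by (simp add: ladd_def)

lemma ev3_add: "ev3 (X + Y) = ev3 X + ev3 Y"
  unfolding ev3_def by (rule LE_add'[OF ladd_ev3])
lemma ev1_add: "ev1 (X + Y) = ev1 X + ev1 Y"
  unfolding ev1_def by (rule LE_add'[OF ladd_ev1])
lemma is_add_ev3: "is_add ev3"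
  unfolding is_add_def by (simp add: ev3_add) (simp add: ev3_def LE_0)
lemma is_add_ev1: "is_add ev1"
  unfolding is_add_def by (simp add: ev1_add) (simp add: ev1_def LE_0)
lemma ev1_monom: "ev1 (monom v k) = v"
  unfolding ev1_def by (rule LE_monom'[OF ladd_ev1])

lemma evk_LE: "evk F = LE (\<lambda>_ Q. coeff (coeff Q 0) 0) F"
proof -
  have "poly F 1 = (\<Sum>i\<le>degree F. coeff F i)" by (simp add: poly_altdef)
  then show ?thesis by (simp add: evk_def LE_def poly_sum poly_0_coeff_0 coeff_sum)
qed

lemma LE_one: "LE (\<lambda>_ c. c) h = poly h (1::'r::comm_semiring_1)"
  by (simp add: LE_def poly_altdef)

lemma hom_poly:
  assumes "is_hom \<phi>"
  shows "\<phi> (poly p x) = poly (map_poly \<phi> p) (\<phi> x)"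
proof (induct p)
  case 0 then show ?case using is_homD(3)[OF assms] by simp
next
  case (pCons a p)
  then show ?case using is_homD[OF assms] by (simp add: map_poly_pCons)
qed

lemma evk_mult: "evk (F * G) = evk F * evk G"
  by (simp add: evk_def)

lemma evk_Delta3: "evk (Delta3 h) = poly h (1::'r::field)"
proof -
  let ?\<phi> = "\<lambda>G::'r poly poly. poly (poly G 0) 0"
  have hp: "is_hom ?\<phi>" by (rule is_hom_comp[OF is_hom_poly is_hom_poly])
  have "evk (Delta3 h) = ?\<phi> (poly (map_poly (\<lambda>c. [:[:c:]:]) h)
            (poly ([:0, 1:] + [:[:0, 1:]:] + [:[:[:0, 1:]:]:]) 1))"
    by (simp add: evk_def Delta3_def poly_pcompose)
  also have "\<dots> = poly (map_poly ?\<phi> (map_poly (\<lambda>c. [:[:c:]:]) h))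
            (?\<phi> (poly ([:0, 1:] + [:[:0, 1:]:] + [:[:[:0, 1:]:]:]) 1))"
    by (rule hom_poly[OF hp])
  also have "map_poly ?\<phi> (map_poly (\<lambda>c. [:[:c:]:]) h) = h"
    by (simp add: map_poly_map_poly o_def)
  also have "?\<phi> (poly ([:0, 1:] + [:[:0, 1:]:] + [:[:[:0, 1:]:]:]) 1) = 1"
    by simp
  finally show ?thesis .
qed

context NA
begin

definition Lam :: "'a poly poly poly poly poly \<Rightarrow> 'a poly" where
  "Lam X = ev1 (ev3 X)"

lemma scaleP_addl: "scaleP sc (c + d) m = scaleP sc c m + scaleP sc d m"
  unfolding scaleP_def
proof -
  have "scaleAt sc (c + d) = (\<lambda>x. scaleAt sc c x + scaleAt sc d x)" by (rule ext) (simp add: scaleAt_addl)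
  then show "map_poly (scaleAt sc (c + d)) m = map_poly (scaleAt sc c) m + map_poly (scaleAt sc d) m"
    by (simp add: map_poly_fun_add)
qed

lemma ev3_tensor3: "ev3 (tensor3 (scaleP sc) F m) = scaleP sc (evk F) m"
proof -
  have "ev3 (tensor3 (scaleP sc) F m) = LE (\<lambda>_ Q. scaleP sc (coeff (coeff Q 0) 0) m) F"
    unfolding ev3_def tensor3_def
    by (subst LE_map_poly) (simp_all add: coeff_map_poly)
  also have "\<dots> = scaleP sc (LE (\<lambda>_ Q. coeff (coeff Q 0) 0) F) m"
    by (rule LE_comp[symmetric]) (simp_all add: scaleP_addl)
  finally show ?thesis by (simp add: evk_LE)
qed

lemma ev3_scale: "ev3 (map_poly (map_poly (map_poly (scaleP sc c))) X) = scaleP sc c (ev3 X)"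
proof -
  have "ev3 (map_poly (map_poly (map_poly (scaleP sc c))) X) = LE (\<lambda>_ Q. scaleP sc c (coeff (coeff Q 0) 0)) X"
    unfolding ev3_def
    by (subst LE_map_poly) (simp_all add: coeff_map_poly)
  also have "\<dots> = scaleP sc c (ev3 X)"
    unfolding ev3_def by (rule LE_comp[symmetric]) (simp_all add: is_addD[OF is_add_scaleP])
  finally show ?thesis .
qed

lemma ev1_scaleP: "ev1 (scaleP sc c m) = scaleAt sc c (ev1 m)"
proof -
  have "ev1 (scaleP sc c m) = LE (\<lambda>_ v. scaleAt sc c v) m"
    unfolding ev1_def scaleP_def by (subst LE_map_poly) simp_all
  also have "\<dots> = scaleAt sc c (ev1 m)"
    unfolding ev1_def by (rule LE_comp[symmetric]) (simp_all add: scaleAt_add)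
  finally show ?thesis .
qed

lemma actP_BL: "actP sc h m = BL (\<lambda>j i c v. monom (scaleAt sc c v) (i + j)) h m"
  by (simp add: actP_def BL_def LE_def)

lemma ev1_actP: "ev1 (actP sc h m) = scaleAt sc (poly h 1) (ev1 m)"
proof -
  have "ev1 (actP sc h m) = LE (\<lambda>j c. LE (\<lambda>i v. scaleAt sc c v) m) h"
    unfolding actP_BL BL_def
    by (simp add: LE_comp[OF is_addD[OF is_add_ev1]] ev1_monom)
  also have "\<dots> = LE (\<lambda>j c. scaleAt sc c (ev1 m)) h"
    unfolding ev1_def
    by (rule LE_cong, rule LE_comp[symmetric]) (simp_all add: scaleAt_add)
  also have "\<dots> = scaleAt sc (LE (\<lambda>_ c. c) h) (ev1 m)"
    by (rule LE_comp[symmetric]) (simp_all add: scaleAt_addl)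
  finally show ?thesis by (simp add: LE_one)
qed

lemma is_add_Lam: "is_add Lam"
  unfolding is_add_def Lam_def by (simp add: ev3_add ev1_add is_addD[OF is_add_ev3] is_addD[OF is_add_ev1])

lemma Lam_tensor3: "Lam (tensor3 (scaleP sc) F m) = scaleAt sc (evk F) (ev1 m)"
  by (simp add: Lam_def ev3_tensor3 ev1_scaleP)

lemma Lam_kspan:
  assumes "X \<in> kspan (\<lambda>c. map_poly (map_poly (map_poly (scaleP sc c)))) (rel3 (scaleP sc) (actP sc))"
  shows "Lam X = 0"
  using assms
proof (induct rule: kspan.induct)
  case kspan_zero then show ?case using is_addD(2)[OF is_add_Lam] by simp
next
  case (kspan_gen x)
  then obtain F h m where x: "x = tensor3 (scaleP sc) (F * Delta3 h) m - tensor3 (scaleP sc) F (actP sc h m)"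
    by (auto simp: rel3_def)
  show ?case
    by (simp add: x is_add_diff[OF is_add_Lam] Lam_tensor3 evk_mult evk_Delta3 ev1_actP scaleAt_mult)
next
  case (kspan_add x y) then show ?case using is_addD(1)[OF is_add_Lam] by simp
next
  case (kspan_scale x c) then show ?case by (simp add: Lam_def ev3_scale ev1_scaleP)
qed

end

lemma eqH3_refl: "eqH3 scP actH X X"
  by (simp add: eqH3_def kspan_zero)

lemma eqH2_refl: "eqH2 scP actH X X"
  by (simp add: eqH2_def kspan_zero)

lemma Phi_conc:
  "Phi 0 0 0 0 0 (Suc 0) = (X1 + X2 + Xt :: 'r::comm_semiring_1 poly poly poly poly poly)"
  "Phi 0 0 0 (Suc 0) 0 0 = (X2 + X3 + Xt :: 'r::comm_semiring_1 poly poly poly poly poly)"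
  by (simp_all add: Phi_def)

lemma X_ring: "(X1 + X2 + Xt) - (X2 + X3 + Xt) = (X1 - X3 :: 'r::comm_ring_1 poly poly poly poly poly)"
  by (simp add: algebra_simps)

context NA
begin

lemma T5_z0 [simp]: "T5 K 0 = 0"
  using T5_zadd[of K 0 0] by simp

lemma tensor3_const: "tensor3 (scaleP sc) F [:[:z:]:] = T5 (E3 F) z"
proof -
  have "[:[:z:]:] = monom (monom z 0) 0" by (simp add: monom_0)
  then show ?thesis by (simp add: tensor3_conv)
qed

lemma E3_D1: "E3 [:0, 1:] = (X1 :: 'k poly poly poly poly poly)"
proof -
  have e: "[:0, 1:] = (monom 1 1 :: 'k poly poly poly)" by (simp add: monom_Suc monom_0 one_pCons)
  show ?thesis by (simp only: e E3_X)
qed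

lemma E3_D3: "E3 [:[:[:0, 1:]:]:] = (X3 :: 'k poly poly poly poly poly)"
proof -
  have e: "[:[:[:0, 1:]:]:] = ([:[:monom 1 1:]:] :: 'k poly poly poly)" by (simp add: monom_Suc monom_0 one_pCons)
  show ?thesis by (simp only: e E3_X)
qed

end

context ALT
begin

lemma assoc_xyx: "assocA mul x y x = 0"
  using assoc_anti23[of x x y] by (simp add: assoc_xxy)

lemma concrete:
  "lprod (scaleP sc) (pprodP sc mul) (pprodP sc mul [:[:b, a:]:] [:[:c:]:]) [:[:b, a:]:]
   - rprod (scaleP sc) (pprodP sc mul) [:[:b, a:]:] (pprodP sc mul [:[:c:]:] [:[:b, a:]:])
   = tensor3 (scaleP sc) [:0, 1:] [:[:assocA mul b c a:]:]
     + tensor3 (scaleP sc) [:[:[:0, 1:]:]:] [:[:assocA mul a c b:]:]"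
proof -
  have x: "[:[:b, a:]:] = monom (monom b 0) 0 + monom (monom a 1) 0"
    by (simp add: monom_0 monom_Suc)
  have y: "[:[:c:]:] = monom (monom c 0) 0" by (simp add: monom_0)
  have bca: "assocA mul a c b = - assocA mul b c a"
    using assoc_anti23[of a b c] assoc_anti12[of b a c] assoc_anti23[of b a c] assoc_anti12[of a c b]
    by (metis assoc_anti12 assoc_anti23 minus_minus)
  have "lprod (scaleP sc) (pprodP sc mul) (pprodP sc mul [:[:b, a:]:] [:[:c:]:]) [:[:b, a:]:]
   - rprod (scaleP sc) (pprodP sc mul) [:[:b, a:]:] (pprodP sc mul [:[:c:]:] [:[:b, a:]:])
   = - LL [:[:b, a:]:] [:[:c:]:] [:[:b, a:]:]"
    by (simp add: LL_def)
  also have "\<dots> = T5 (X1 + X2 + Xt) (assocA mul b c a) + T5 (X2 + X3 + Xt) (assocA mul a c b)"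
    unfolding x y by (simp add: LL_add1 LL_add3 LL_mon assoc_xyx Phi_conc)
  also have "\<dots> = T5 (X1 + X2 + Xt) (assocA mul b c a) - T5 (X2 + X3 + Xt) (assocA mul b c a)"
    by (simp add: bca T5_zneg)
  also have "\<dots> = T5 ((X1 + X2 + Xt) - (X2 + X3 + Xt)) (assocA mul b c a)"
    by (rule T5_diff[symmetric])
  also have "\<dots> = T5 (X1 - X3) (assocA mul b c a)"
    by (simp only: X_ring)
  also have "\<dots> = T5 X1 (assocA mul b c a) + T5 X3 (assocA mul a c b)"
    by (simp add: bca T5_zneg T5_diff)
  finally show ?thesis by (simp add: tensor3_const E3_D1 E3_D3)
qed

lemma Lam_R:
  "Lam (tensor3 (scaleP sc) [:0, 1:] [:[:assocA mul b c a:]:]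
     + tensor3 (scaleP sc) [:[:[:0, 1:]:]:] [:[:assocA mul a c b:]:]) = [:assocA mul b c a:]"
proof -
  have h1: "evk [:0, 1:] = 1" by (simp add: evk_def)
  have h2: "evk [:[:[:0, 1:]:]:] = 0" by (simp add: evk_def)
  have h3: "ev1 [:[:z:]:] = [:z:]" for z
    using ev1_monom[of "[:z:]" 0] by (simp add: monom_0)
  show ?thesis
    by (simp add: is_addD(1)[OF is_add_Lam] Lam_tensor3 h1 h2 h3)
qed

lemma assoc_cyc: "assocA mul b c a = assocA mul a b c"
  by (metis assoc_anti12 assoc_anti23 minus_minus)

lemma R_nonzero:
  assumes "assocA mul a b c \<noteq> 0"
  shows "\<not> eqH3 (scaleP sc) (actP sc)
         (tensor3 (scaleP sc) [:0, 1:] [:[:assocA mul b c a:]:]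
          + tensor3 (scaleP sc) [:[:[:0, 1:]:]:] [:[:assocA mul a c b:]:]) 0"
proof
  assume "eqH3 (scaleP sc) (actP sc)
         (tensor3 (scaleP sc) [:0, 1:] [:[:assocA mul b c a:]:]
          + tensor3 (scaleP sc) [:[:[:0, 1:]:]:] [:[:assocA mul a c b:]:]) 0"
  then have "Lam (tensor3 (scaleP sc) [:0, 1:] [:[:assocA mul b c a:]:]
          + tensor3 (scaleP sc) [:[:[:0, 1:]:]:] [:[:assocA mul a c b:]:]) = 0"
    unfolding eqH3_def by (intro Lam_kspan) simp
  then show False using assms Lam_R by (simp add: assoc_cyc)
qed

lemma alt_pseudo: "alternative_pseudo (scaleP sc) (actP sc) (pprodP sc mul)"
  unfolding alternative_pseudo_def
proof (intro conjI allI)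
  fix u v w
  have e1: "lprod (scaleP sc) (pprodP sc mul) (pprodP sc mul v u) w - rprod (scaleP sc) (pprodP sc mul) v (pprodP sc mul u w)
            = - LL v u w" by (simp add: LL_def)
  show "eqH3 (scaleP sc) (actP sc)
          (rprod (scaleP sc) (pprodP sc mul) u (pprodP sc mul v w) - lprod (scaleP sc) (pprodP sc mul) (pprodP sc mul u v) w)
          (sigma12 (lprod (scaleP sc) (pprodP sc mul) (pprodP sc mul v u) w - rprod (scaleP sc) (pprodP sc mul) v (pprodP sc mul u w)))"
    unfolding e1 LL_def[symmetric] AL1[of u v w] by (rule eqH3_refl)
next
  fix u v w
  have e2: "lprod (scaleP sc) (pprodP sc mul) (pprodP sc mul u w) v - rprod (scaleP sc) (pprodP sc mul) u (pprodP sc mul w v)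
            = - LL u w v" by (simp add: LL_def)
  show "eqH3 (scaleP sc) (actP sc)
          (rprod (scaleP sc) (pprodP sc mul) u (pprodP sc mul v w) - lprod (scaleP sc) (pprodP sc mul) (pprodP sc mul u v) w)
          (sigma23 (lprod (scaleP sc) (pprodP sc mul) (pprodP sc mul u w) v - rprod (scaleP sc) (pprodP sc mul) u (pprodP sc mul w v)))"
    unfolding e2 LL_def[symmetric] AL2[of u v w] by (rule eqH3_refl)
qed

lemma not_assoc_gen:
  assumes "assocA mul a b c \<noteq> 0"
  shows "\<not> pseudo_assoc_on (scaleP sc) (actP sc) (pprodP sc mul)
         (generated_subalgebra (scaleP sc) (actP sc) (pprodP sc mul) {[:[:b, a:]:], [:[:c:]:]})"
proof
  assume pa: "pseudo_assoc_on (scaleP sc) (actP sc) (pprodP sc mul)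
         (generated_subalgebra (scaleP sc) (actP sc) (pprodP sc mul) {[:[:b, a:]:], [:[:c:]:]})"
  have inx: "[:[:b, a:]:] \<in> generated_subalgebra (scaleP sc) (actP sc) (pprodP sc mul) {[:[:b, a:]:], [:[:c:]:]}"
    by (auto simp: generated_subalgebra_def)
  have iny: "[:[:c:]:] \<in> generated_subalgebra (scaleP sc) (actP sc) (pprodP sc mul) {[:[:b, a:]:], [:[:c:]:]}"
    by (auto simp: generated_subalgebra_def)
  from pa inx iny have "eqH3 (scaleP sc) (actP sc)
     (lprod (scaleP sc) (pprodP sc mul) (pprodP sc mul [:[:b, a:]:] [:[:c:]:]) [:[:b, a:]:])
     (rprod (scaleP sc) (pprodP sc mul) [:[:b, a:]:] (pprodP sc mul [:[:c:]:] [:[:b, a:]:]))"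
    unfolding pseudo_assoc_on_def by blast
  then have "eqH3 (scaleP sc) (actP sc)
         (tensor3 (scaleP sc) [:0, 1:] [:[:assocA mul b c a:]:]
          + tensor3 (scaleP sc) [:[:[:0, 1:]:]:] [:[:assocA mul a c b:]:]) 0"
    unfolding eqH3_def concrete[symmetric] by simp
  with R_nonzero[OF assms] show False by simp
qed

end

context NA
begin

definition aF :: "nat \<Rightarrow> nat \<Rightarrow> 'k \<Rightarrow> 'a poly \<Rightarrow> 'a poly poly" where
  "aF j i c v = monom (scaleAt sc c v) (i + j)"

lemma biadd_aF: "biadd aF"
  unfolding biadd_def aF_def by (simp add: scaleAt_addl scaleAt_add add_monom)

lemma actP_BL': "actP sc h m = BL aF h m"
proof -
  have "aF = (\<lambda>j i c v. monom (scaleAt sc c v) (i + j))" by (intro ext) (simp add: aF_def)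
  then show ?thesis by (simp add: actP_BL)
qed

lemma actP_add1: "actP sc (h + h') m = actP sc h m + actP sc h' m"
  by (simp add: actP_BL' BL_add1[OF biadd_aF])
lemma actP_add2: "actP sc h (m + m') = actP sc h m + actP sc h m'"
  by (simp add: actP_BL' BL_add2[OF biadd_aF])
lemma actP_monom: "actP sc (monom c j) (monom p i) = monom (scaleAt sc c p) (i + j)"
  by (simp add: actP_BL' BL_monom[OF biadd_aF] aF_def)

lemma actP_mult: "actP sc (h * g) u = actP sc h (actP sc g u)"
proof (induct h arbitrary: g u rule: poly_induct_monom)
  case (1 c j)
  show ?case
  proof (induct g arbitrary: u rule: poly_induct_monom)
    case (1 d k)
    show ?case
    proof (induct u rule: poly_induct_monom)
      case (1 p i)
      show ?case by (simp add: mult_monom actP_monom scaleAt_mult add_ac)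
    next
      case (2 p q) then show ?case by (simp add: actP_add2)
    qed
  next
    case (2 p q) then show ?case by (simp add: distrib_left actP_add1 actP_add2)
  qed
next
  case (2 p q) then show ?case by (simp add: distrib_right actP_add1)
qed

lemma actP_const: "actP sc [:c:] u = scaleP sc c u"
proof (induct u rule: poly_induct_monom)
  case (1 p i)
  show ?case by (simp add: monom_0[symmetric] actP_monom scaleP_def map_poly_monom)
next
  case (2 p q) then show ?case by (simp add: actP_add2 is_addD(1)[OF is_add_scaleP])
qed

lemma tensor2_addm: "tensor2 (scaleP sc) F (m + m') = tensor2 (scaleP sc) F m + tensor2 (scaleP sc) F m'"
  unfolding tensor2_def is_addD(1)[OF is_add_scaleP]
  by (simp add: map_poly_fun_add_ext is_addD(2)[OF is_add_scaleP])

lemma tensor2_0m: "tensor2 (scaleP sc) F 0 = 0"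
  unfolding tensor2_def is_addD(2)[OF is_add_scaleP]
  by (simp add: map_poly_zero_ext)

lemma tensor2_addF: "tensor2 (scaleP sc) (F + F') m = tensor2 (scaleP sc) F m + tensor2 (scaleP sc) F' m"
proof -
  have "is_add (\<lambda>c. scaleP sc c m)" by (simp add: is_add_def scaleP_addl)
  then have "is_add (map_poly (map_poly (\<lambda>c. scaleP sc c m)))" by (intro is_add_map_poly)
  then show ?thesis unfolding tensor2_def by (rule is_addD(1))
qed

lemma tensor2_monom: "tensor2 (scaleP sc) (monom (monom e q) p) m = monom (monom (scaleP sc e m) q) p"
  by (simp add: tensor2_def map_poly_monom)

lemma sadd_act2: "sadd (\<lambda>i j m. tensor2 (scaleP sc) (G i j) m)"
  by (simp add: sadd_def is_add_def tensor2_addm tensor2_0m)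

lemma act2_alt: "act2 (scaleP sc) F X = sum2 X (\<lambda>i j m. tensor2 (scaleP sc) (F * mon2 i j) m)"
  by (simp add: act2_def)

lemma act2_add1: "act2 (scaleP sc) F (X + Y) = act2 (scaleP sc) F X + act2 (scaleP sc) F Y"
  unfolding act2_alt by (rule sum2_add[OF sadd_act2])
lemma act2_sum: "act2 (scaleP sc) F (\<Sum>x\<in>A. f x) = (\<Sum>x\<in>A. act2 (scaleP sc) F (f x))"
  unfolding act2_alt by (rule sum2_sum[OF sadd_act2])
lemma act2_add2: "act2 (scaleP sc) (F + F') X = act2 (scaleP sc) F X + act2 (scaleP sc) F' X"
proof -
  have e: "(\<lambda>i j m. tensor2 (scaleP sc) (F * mon2 i j + F' * mon2 i j) m)
         = (\<lambda>i j m. tensor2 (scaleP sc) (F * mon2 i j) m + tensor2 (scaleP sc) (F' * mon2 i j) m)"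
    by (intro ext) (rule tensor2_addF)
  show ?thesis unfolding act2_alt distrib_right e by (rule sum2_fun_add)
qed
lemma act2_monom: "act2 (scaleP sc) F (monom (monom m j) i) = tensor2 (scaleP sc) (F * mon2 i j) m"
  unfolding act2_alt by (simp add: sum2_monom[OF sadd_act2])

lemma tensHH_add1: "tensHH (h + h') g = tensHH h g + tensHH h' g"
  unfolding tensHH_def by (rule map_poly_add_hom) (simp_all add: smult_add_left)
lemma tensHH_add2: "tensHH h (g + g') = tensHH h g + tensHH h g'"
  unfolding tensHH_def by (simp add: smult_add_right map_poly_fun_add)
lemma tensHH_monom: "tensHH (monom c i) (monom d j) = monom (monom (c * d) j) i"
  by (simp add: tensHH_def map_poly_monom smult_monom)

lemma H7_mon:
  "pprodP sc mul (actP sc (monom c i0) (monom (monom a n) i)) (actP sc (monom d j0) (monom (monom b m) j))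
   = act2 (scaleP sc) (tensHH (monom c i0) (monom d j0)) (pprodP sc mul (monom (monom a n) i) (monom (monom b m) j))"
proof -
  have "pprodP sc mul (actP sc (monom c i0) (monom (monom a n) i)) (actP sc (monom d j0) (monom (monom b m) j))
     = pprodP sc mul (monom (monom (sc c a) n) (i + i0)) (monom (monom (sc d b) m) (j + j0))"
    by (simp add: actP_monom scaleAt_monom)
  also have "\<dots> = act2 (scaleP sc) (tensHH (monom c i0) (monom d j0)) (pprodP sc mul (monom (monom a n) i) (monom (monom b m) j))"
    unfolding pp_monom act2_sum
    by (intro sum.cong refl)
       (simp add: act2_monom tensHH_monom mon2_def mult_monom tensor2_monom scaleP_def scaleAt_monom
                  map_poly_monom mul_scl mul_scr sc_mult sc_comm add_ac del: of_nat_mult)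
  finally show ?thesis .
qed

lemma H7:
  "pprodP sc mul (actP sc h u) (actP sc g v) = act2 (scaleP sc) (tensHH h g) (pprodP sc mul u v)"
proof (induct h arbitrary: g u v rule: poly_induct_monom)
  case (1 c i0)
  show ?case
  proof (induct g arbitrary: u v rule: poly_induct_monom)
    case (1 d j0)
    show ?case
    proof (induct u arbitrary: v rule: poly2_induct_monom)
      case (1 a n i)
      show ?case
      proof (induct v rule: poly2_induct_monom)
        case (1 b m j) show ?case by (rule H7_mon)
      next
        case (2 p q) then show ?case by (simp add: actP_add2 pp_add2 act2_add1)
      qed
    next
      case (2 p q) then show ?case by (simp add: actP_add2 pp_add1 act2_add1)
    qed
  next
    case (2 p q) then show ?case by (simp add: actP_add1 pp_add2 tensHH_add2 act2_add2)
  qed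
next
  case (2 p q) then show ?case by (simp add: actP_add1 pp_add1 tensHH_add1 act2_add2)
qed

lemma pseudoalg: "H_pseudoalgebra (scaleP sc) (actP sc) (pprodP sc mul)"
  unfolding H_pseudoalgebra_def
  by (simp add: actP_add1 actP_add2 actP_mult actP_const pp_add1 pp_add2 H7 eqH2_refl)

end

lemma mm2: "monom (monom (c::'r::comm_semiring_1) e) s = [:[:c:]:] * monom 1 1 ^ s * [:monom 1 1:] ^ e"
proof -
  have "[:monom c e:] = [:[:c:] * monom 1 1 ^ e:]" by (simp only: monom_as_mult[of c e])
  also have "\<dots> = [:[:c:]:] * [:monom 1 1:] ^ e"
    by (simp only: is_homD(2)[OF is_hom_const] hom_power[OF is_hom_const])
  finally have "[:monom c e:] = [:[:c:]:] * [:monom 1 1:] ^ e" .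
  then show ?thesis by (simp add: monom_as_mult[of "monom c e" s] mult_ac)
qed

lemma map2_mult_const:
  fixes f :: "'a::zero \<Rightarrow> 'b::comm_semiring_0"
  assumes "f 0 = 0"
  shows "map_poly (map_poly f) K * [:[:M:]:] = map_poly (map_poly (\<lambda>c. f c * M)) K"
proof -
  have a: "map_poly f y * [:M:] = map_poly (\<lambda>c. f c * M) y" for y
    by (rule map_poly_mult_const) (simp add: assms)
  have "map_poly (map_poly f) K * [:[:M:]:] = map_poly (\<lambda>y. map_poly f y * [:M:]) K"
    by (rule map_poly_mult_const) (simp add: assms)
  then show ?thesis by (simp only: a)
qed

context NA
begin

definition T2 :: "'k poly poly \<Rightarrow> 'a \<Rightarrow> 'a poly poly" where
  "T2 K z = map_poly (map_poly (\<lambda>c. sc c z)) K"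

definition T3 :: "'k poly poly poly \<Rightarrow> 'a \<Rightarrow> 'a poly poly poly" where
  "T3 K z = map_poly (map_poly (map_poly (\<lambda>c. sc c z))) K"

lemma is_add_T2: "is_add (\<lambda>K. T2 K z)"
  unfolding T2_def by (intro is_add_map_poly is_add_scz)
lemma is_add_T3: "is_add (\<lambda>K. T3 K z)"
  unfolding T3_def by (intro is_add_map_poly is_add_scz)

lemma T2_sum: "T2 (\<Sum>x\<in>A. f x) z = (\<Sum>x\<in>A. T2 (f x) z)"
  using is_add_sum[OF is_add_T2] .
lemma T3_sum: "T3 (\<Sum>x\<in>A. f x) z = (\<Sum>x\<in>A. T3 (f x) z)"
  using is_add_sum[OF is_add_T3] .

lemma T2_monom: "T2 (monom (monom c e) s) z = monom (monom (sc c z) e) s"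
  by (simp add: T2_def map_poly_monom)

lemma T3_monom: "T3 (monom Q s) z = monom (T2 Q z) s"
  by (simp add: T3_def T2_def map_poly_monom)

lemma T3_sc: "T3 K (sc d z) = T3 ([:[:[:d:]:]:] * K) z"
proof -
  have e: "(\<lambda>c. sc c (sc d z)) = (\<lambda>x. sc d (sc x z))" by (rule ext) (rule sc_comm)
  show ?thesis
  unfolding T3_def const_mult_poly
  by (simp add: map_poly_map_poly o_def const_mult_poly sc_mult e)
qed

lemma T3_of_nat: "T3 K (sc (of_nat n) z) = T3 (of_nat n * K) z"
  by (simp add: T3_sc of_nat_poly)

lemma coF_T2: "coF n x = T2 ((monom 1 1 + [:monom 1 1:]) ^ n) x"
proof -
  have "(monom 1 1 + [:monom 1 1:]) ^ n = (\<Sum>s\<le>n. monom (monom (of_nat (n choose s) :: 'k) (n - s)) s)"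
    by (simp add: binomial_ring mm2 of_nat_poly mult_ac)
  then show ?thesis by (simp add: T2_sum T2_monom coF_def)
qed

lemma biadd_mulAt2: "biadd (\<lambda>i j P Q. monom (mulAt mul P Q) (i + j))"
  unfolding biadd_def by (simp add: mulAt_add1 mulAt_add2 add_monom)

lemma mulAt2_BL: "mulAt (mulAt mul) X Y = BL (\<lambda>i j P Q. monom (mulAt mul P Q) (i + j)) X Y"
  by (simp add: mulAt_def BL_def LE_def)

lemma mulHB_eq: "mulHB (mulAt mul) X Y = mulAt (mulAt mul) X Y"
  by (simp add: mulHB_def mulAt_def)

lemma C3_mon: "coactAt sc (mulAt mul (monom a n) (monom b m)) = mulHB (mulAt mul) (coactAt sc (monom a n)) (coactAt sc (monom b m))"
proof -
  have "mulHB (mulAt mul) (coactAt sc (monom a n)) (coactAt sc (monom b m))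
      = (\<Sum>s\<le>n. \<Sum>r\<le>m. monom (monom (sc (of_nat ((n choose s) * (m choose r))) (mul a b)) (n - s + (m - r))) (s + r))"
    unfolding mulHB_eq mulAt2_BL coact_monom coF_def
    by (simp add: BL_sum1[OF biadd_mulAt2] BL_sum2[OF biadd_mulAt2] BL_monom[OF biadd_mulAt2] mulAt_monom
        sc_of_nat_mult del: of_nat_mult) (rule sum.swap)
  also have "\<dots> = T2 ((monom 1 1 + [:monom 1 1:]) ^ n * (monom 1 1 + [:monom 1 1:]) ^ m) (mul a b)"
  proof -
    have "(monom 1 1 + [:monom 1 1:]) ^ n * (monom 1 1 + [:monom 1 1:]) ^ m
       = (\<Sum>s\<le>n. \<Sum>r\<le>m. monom (monom (of_nat ((n choose s) * (m choose r)) :: 'k) (n - s + (m - r))) (s + r))"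
      unfolding binomial_ring sum_product
    proof (intro sum.cong refl)
      fix s r
      have e: "([:monom 1 1:] :: 'k poly poly) ^ (n - s + (m - r)) = [:monom 1 1:] ^ (n - s) * [:monom 1 1:] ^ (m - r)"
        by (rule power_add)
      show "of_nat (n choose s) * monom 1 1 ^ s * [:monom 1 1:] ^ (n - s) * (of_nat (m choose r) * monom 1 1 ^ r * [:monom 1 1:] ^ (m - r))
          = monom (monom (of_nat ((n choose s) * (m choose r)) :: 'k) (n - s + (m - r))) (s + r)"
        by (simp only: mm2 e) (simp add: of_nat_poly power_add mult_ac)
    qed
    then show ?thesis by (simp add: T2_sum T2_monom del: of_nat_mult)
  qed
  also have "\<dots> = coactAt sc (mulAt mul (monom a n) (monom b m))"
    by (simp add: mulAt_monom coact_monom coF_T2 power_add)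
  finally show ?thesis ..
qed

lemma mulHB_add1: "mulHB (mulAt mul) (X + X') Y = mulHB (mulAt mul) X Y + mulHB (mulAt mul) X' Y"
  by (simp add: mulHB_eq mulAt2_BL BL_add1[OF biadd_mulAt2])
lemma mulHB_add2: "mulHB (mulAt mul) X (Y + Y') = mulHB (mulAt mul) X Y + mulHB (mulAt mul) X Y'"
  by (simp add: mulHB_eq mulAt2_BL BL_add2[OF biadd_mulAt2])

lemma C3: "coactAt sc (mulAt mul u v) = mulHB (mulAt mul) (coactAt sc u) (coactAt sc v)"
proof (induct u arbitrary: v rule: poly_induct_monom)
  case (1 a n)
  show ?case
  proof (induct v rule: poly_induct_monom)
    case (1 b m) show ?case by (rule C3_mon)
  next
    case (2 p q) then show ?case by (simp add: mulAt_add2 coact_add mulHB_add2)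
  qed
next
  case (2 p q) then show ?case by (simp add: mulAt_add1 coact_add mulHB_add1)
qed

lemma C2: "coactAt sc (scaleAt sc c u) = map_poly (scaleAt sc c) (coactAt sc u)"
proof (induct u rule: poly_induct_monom)
  case (1 a n)
  have "map_poly (scaleAt sc c) (coactAt sc (monom a n))
      = (\<Sum>s\<le>n. monom (scaleAt sc c (monom (sc (of_nat (n choose s)) a) (n - s))) s)"
    unfolding coact_monom coF_def
    by (simp add: map_poly_sum_hom scaleAt_add map_poly_monom)
  then show ?case by (simp add: scaleAt_monom coact_monom coF_def sc_comm)
next
  case (2 p q)
  then show ?case by (simp add: scaleAt_add coact_add map_poly_add_hom)
qed

lemma C5: "coeff (coactAt sc u) 0 = u"
proof (induct u rule: poly_induct_monom)
  case (1 a n)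
  show ?case by (simp add: coact_monom coF_def coeff_sum)
next
  case (2 p q) then show ?case by (simp add: coact_add)
qed

end

context NA
begin

definition dG :: "nat \<Rightarrow> 'a poly \<Rightarrow> 'a poly poly poly" where
  "dG s x = map_poly (map_poly (\<lambda>c. scaleAt sc c x)) (Delta2 (monom 1 s))"

lemma ladd_dG: "ladd dG"
proof -
  have "dG s (x + x') = dG s x + dG s x'" for s x x'
  proof -
    have e: "(\<lambda>c. scaleAt sc c (x + x')) = (\<lambda>c. scaleAt sc c x + scaleAt sc c x')"
      by (rule ext) (rule scaleAt_add)
    show ?thesis unfolding dG_def e by (simp add: map_poly_fun_add_ext)
  qed
  moreover have "dG s 0 = 0" for s
    unfolding dG_def by (simp add: map_poly_zero_ext)
  ultimately show ?thesis by (simp add: ladd_def)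
qed

lemma DeltaId_LE: "DeltaId (scaleAt sc) X = LE dG X"
  by (simp add: DeltaId_def LE_def dG_def)

lemma DeltaId_add: "DeltaId (scaleAt sc) (X + Y) = DeltaId (scaleAt sc) X + DeltaId (scaleAt sc) Y"
  by (simp add: DeltaId_LE LE_add'[OF ladd_dG])

lemma is_add_coact: "is_add (coactAt sc)"
  by (simp add: is_add_def coact_add)

lemma E21_power: "E21 ((monom 1 1 + [:monom 1 1:]) ^ s) = ((monom 1 1 + [:monom 1 1:]) ^ s :: 'k poly poly poly)"
  by (simp only: hom_power[OF is_hom_E21] is_homD(1)[OF is_hom_E21] E21_X)

lemma dG_T3: "dG s (monom y e) = T3 ((monom 1 1 + [:monom 1 1:]) ^ s * [:[:monom 1 1:]:] ^ e) y"
proof -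
  have w3: "[:[:monom (1::'k) 1:]:] ^ e = [:[:monom 1 e:]:]"
    using hom_power[OF is_hom_comp[OF is_hom_const is_hom_const], of "monom (1::'k) 1" e]
    by (simp add: monom_power)
  have "(monom 1 1 + [:monom 1 1:]) ^ s * [:[:monom 1 1:]:] ^ e
        = E21 ((monom 1 1 + [:monom 1 1:]) ^ s) * [:[:monom (1::'k) e:]:]"
    by (simp only: E21_power w3)
  also have "\<dots> = map_poly (map_poly (\<lambda>c. [:c:] * monom 1 e)) ((monom 1 1 + [:monom 1 1:]) ^ s)"
    unfolding E21_def by (rule map2_mult_const) simp
  also have "\<dots> = map_poly (map_poly (\<lambda>c. monom c e)) ((monom 1 1 + [:monom 1 1:]) ^ s)"
    by (simp add: smult_monom)
  finally have k: "(monom 1 1 + [:monom 1 1:]) ^ s * [:[:monom 1 1:]:] ^ e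
        = map_poly (map_poly (\<lambda>c. monom c e)) ((monom 1 1 + [:monom (1::'k) 1:]) ^ s)" .
  show ?thesis
    unfolding k dG_def Delta2_monom1 T3_def
    by (simp add: map_poly_map_poly o_def map_poly_monom scaleAt_monom)
qed

lemma C4_mon: "map_poly (coactAt sc) (coactAt sc (monom a n)) = DeltaId (scaleAt sc) (coactAt sc (monom a n))"
proof -
  let ?W1 = "monom 1 1 :: 'k poly poly poly"
  let ?W2 = "[:monom 1 1:] :: 'k poly poly poly"
  let ?W3 = "[:[:monom 1 1:]:] :: 'k poly poly poly"
  have "map_poly (coactAt sc) (coactAt sc (monom a n))
      = (\<Sum>s\<le>n. monom (coactAt sc (monom (sc (of_nat (n choose s)) a) (n - s))) s)"
    unfolding coact_monom[of a n] coF_def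
    by (simp add: map_poly_sum_hom coact_add map_poly_monom)
  also have "\<dots> = (\<Sum>s\<le>n. T3 (of_nat (n choose s) * ?W1 ^ s * (?W2 + ?W3) ^ (n - s)) a)"
  proof (intro sum.cong refl)
    fix s
    have "monom (coactAt sc (monom (sc (of_nat (n choose s)) a) (n - s))) s
        = T3 (monom ((monom 1 1 + [:monom 1 1:]) ^ (n - s)) s) (sc (of_nat (n choose s)) a)"
      by (simp only: coact_monom coF_T2 T3_monom)
    also have "monom ((monom 1 1 + [:monom (1::'k) 1:]) ^ (n - s)) s = [:(monom 1 1 + [:monom 1 1:]) ^ (n - s):] * ?W1 ^ s"
      by (rule monom_as_mult)
    also have "[:(monom 1 1 + [:monom (1::'k) 1:]) ^ (n - s):] = (?W2 + ?W3) ^ (n - s)"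
      by (simp only: hom_power[OF is_hom_const] is_homD(1)[OF is_hom_const])
    finally show "monom (coactAt sc (monom (sc (of_nat (n choose s)) a) (n - s))) s
        = T3 (of_nat (n choose s) * ?W1 ^ s * (?W2 + ?W3) ^ (n - s)) a"
      by (simp add: T3_of_nat mult_ac)
  qed
  also have "\<dots> = T3 (\<Sum>s\<le>n. of_nat (n choose s) * ?W1 ^ s * (?W2 + ?W3) ^ (n - s)) a"
    by (simp only: T3_sum)
  also have "\<dots> = T3 ((?W1 + (?W2 + ?W3)) ^ n) a"
    by (simp only: binomial_ring)
  also have "\<dots> = T3 (\<Sum>s\<le>n. of_nat (n choose s) * (?W1 + ?W2) ^ s * ?W3 ^ (n - s)) a"
    by (simp only: binomial_ring[symmetric] add.assoc)
  also have "\<dots> = (\<Sum>s\<le>n. dG s (monom (sc (of_nat (n choose s)) a) (n - s)))"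
    by (simp add: T3_sum dG_T3 T3_of_nat mult_ac)
  also have "\<dots> = DeltaId (scaleAt sc) (coactAt sc (monom a n))"
    unfolding DeltaId_LE coact_monom coF_def
    by (simp add: LE_sum'[OF ladd_dG] LE_monom'[OF ladd_dG])
  finally show ?thesis .
qed

lemma C4: "map_poly (coactAt sc) (coactAt sc u) = DeltaId (scaleAt sc) (coactAt sc u)"
proof (induct u rule: poly_induct_monom)
  case (1 a n) show ?case by (rule C4_mon)
next
  case (2 p q)
  then show ?case by (simp add: coact_add DeltaId_add map_poly_add_hom)
qed

lemma comodule: "H_comodule_algebra (scaleAt sc) (mulAt mul) (coactAt sc)"
  unfolding H_comodule_algebra_def
  by (simp add: coact_add C2 C3 C4 C5)

end

theorem mainTheorem12:
  fixes scA :: "'k::field_char_0 \<Rightarrow> 'a::ab_group_add \<Rightarrow> 'a"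
    and mulA :: "'a \<Rightarrow> 'a \<Rightarrow> 'a"
    and a b c :: 'a
  assumes "nonassoc_algebra scA mulA"
    and "alternative_alg mulA"
    and "\<not> associative_alg mulA"
    and "assocA mulA a b c \<noteq> 0"
  shows "H_comodule_algebra (scaleAt scA) (mulAt mulA) (coactAt scA)
    \<and> H_pseudoalgebra (scaleP scA) (actP scA) (pprodP scA mulA)
    \<and> alternative_pseudo (scaleP scA) (actP scA) (pprodP scA mulA)
    \<and> eqH3 (scaleP scA) (actP scA)
         (lprod (scaleP scA) (pprodP scA mulA) (pprodP scA mulA [:[:b, a:]:] [:[:c:]:]) [:[:b, a:]:]
          - rprod (scaleP scA) (pprodP scA mulA) [:[:b, a:]:] (pprodP scA mulA [:[:c:]:] [:[:b, a:]:]))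
         (tensor3 (scaleP scA) [:0, 1:] [:[:assocA mulA b c a:]:]
          + tensor3 (scaleP scA) [:[:[:0, 1:]:]:] [:[:assocA mulA a c b:]:])
    \<and> \<not> eqH3 (scaleP scA) (actP scA)
         (tensor3 (scaleP scA) [:0, 1:] [:[:assocA mulA b c a:]:]
          + tensor3 (scaleP scA) [:[:[:0, 1:]:]:] [:[:assocA mulA a c b:]:]) 0
    \<and> \<not> pseudo_assoc_on (scaleP scA) (actP scA) (pprodP scA mulA)
         (generated_subalgebra (scaleP scA) (actP scA) (pprodP scA mulA) {[:[:b, a:]:], [:[:c:]:]})"
proof -
  interpret A: ALT scA mulA
    by unfold_locales (rule assms(1), rule assms(2))
  show ?thesis
    using A.comodule A.pseudoalg A.alt_pseudo A.concrete A.R_nonzero[OF assms(4)] A.not_assoc_gen[OF assms(4)]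
    by (simp add: eqH3_refl)
qed

end
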